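(* Let $\Phi\colon\mathcal{M}(2;\mathbb{C})\dashrightarrow\mathcal{M}(2;\mathbb{C})$ be a rational map compatible with conjugation. Then $\Phi$ is birational if and only if its restriction $\Psi=\Phi_{|\mathcal{D}}\colon\mathcal{D}\dashrightarrow\mathcal{D}$ is birational.
   Context: $\mathcal{D}$ is the set of diagonal $2\times2$ complex matrices; a rational map compatible with conjugation maps $\mathcal{D}$ (outside its indeterminacy locus) into $\mathcal{D}$. $\Phi$ is compatible with conjugation if $\mathrm{A}\Phi(\mathrm{M})\mathrm{A}^{-1}=\Phi(\mathrm{A}\mathrm{M}\mathrm{A}^{-1})$ for all $\mathrm{A}\in\mathrm{GL}(2;\mathbb{C})$ whenever both $\mathrm{M}$ and $\mathrm{A}\mathrm{M}\mathrm{A}^{-1}$ lie outside the indeterminacy locus of $\Phi$. *)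

theory Defs
  imports "HOL-Analysis.Analysis"
begin

inductive polyfun :: "('a \<Rightarrow> complex) set \<Rightarrow> ('a \<Rightarrow> complex) \<Rightarrow> bool"
  for C :: "('a \<Rightarrow> complex) set" where
  pf_const: "polyfun C (\<lambda>x. c)"
| pf_coord: "f \<in> C \<Longrightarrow> polyfun C f"
| pf_add: "polyfun C f \<Longrightarrow> polyfun C g \<Longrightarrow> polyfun C (\<lambda>x. f x + g x)"
| pf_mult: "polyfun C f \<Longrightarrow> polyfun C g \<Longrightarrow> polyfun C (\<lambda>x. f x * g x)"

definition mcoords :: "(complex^2^2 \<Rightarrow> complex) set" where
  "mcoords = {(\<lambda>M. M $ i $ j) | i j. True}"

definition vcoords :: "(complex^2 \<Rightarrow> complex) set" where
  "vcoords = {(\<lambda>x. x $ i) | i. True}"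

text \<open>(p,q) represents the rational function given by the scalar function F:
  F agrees with p/q on a nonempty Zariski open set (complement of the zero set
  of a nonzero polynomial h). Only generic values of F matter.\<close>
definition ratrep :: "('a \<Rightarrow> complex) set \<Rightarrow> ('a \<Rightarrow> complex) \<Rightarrow> ('a \<Rightarrow> complex) \<Rightarrow> ('a \<Rightarrow> complex) \<Rightarrow> bool" where
  "ratrep C F p q \<longleftrightarrow> polyfun C p \<and> polyfun C q \<and> (\<exists>x. q x \<noteq> 0) \<and>
     (\<exists>h. polyfun C h \<and> (\<exists>x. h x \<noteq> 0) \<and> (\<forall>y. h y \<noteq> 0 \<longrightarrow> q y \<noteq> 0 \<and> F y = p y / q y))"

definition rational_fun :: "('a \<Rightarrow> complex) set \<Rightarrow> ('a \<Rightarrow> complex) \<Rightarrow> bool" where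
  "rational_fun C F \<longleftrightarrow> (\<exists>p q. ratrep C F p q)"

definition regular_fun :: "('a \<Rightarrow> complex) set \<Rightarrow> ('a \<Rightarrow> complex) \<Rightarrow> 'a \<Rightarrow> bool" where
  "regular_fun C F x \<longleftrightarrow> (\<exists>p q. ratrep C F p q \<and> q x \<noteq> 0)"

definition rval :: "('a \<Rightarrow> complex) set \<Rightarrow> ('a \<Rightarrow> complex) \<Rightarrow> 'a \<Rightarrow> complex" where
  "rval C F x = (SOME v. \<exists>p q. ratrep C F p q \<and> q x \<noteq> 0 \<and> v = p x / q x)"

definition rational_map_m :: "(complex^2^2 \<Rightarrow> complex^2^2) \<Rightarrow> bool" where
  "rational_map_m F \<longleftrightarrow> (\<forall>i j. rational_fun mcoords (\<lambda>M. F M $ i $ j))"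

definition regular_m :: "(complex^2^2 \<Rightarrow> complex^2^2) \<Rightarrow> complex^2^2 \<Rightarrow> bool" where
  "regular_m F M \<longleftrightarrow> (\<forall>i j. regular_fun mcoords (\<lambda>N. F N $ i $ j) M)"

definition val_m :: "(complex^2^2 \<Rightarrow> complex^2^2) \<Rightarrow> complex^2^2 \<Rightarrow> complex^2^2" where
  "val_m F M = (\<chi> i j. rval mcoords (\<lambda>N. F N $ i $ j) M)"

definition birational_m :: "(complex^2^2 \<Rightarrow> complex^2^2) \<Rightarrow> bool" where
  "birational_m F \<longleftrightarrow> rational_map_m F \<and>
    (\<exists>G. rational_map_m G \<and>
      (\<exists>h. polyfun mcoords h \<and> (\<exists>M. h M \<noteq> 0) \<and>
         (\<forall>M. h M \<noteq> 0 \<longrightarrow> regular_m F M \<and> regular_m G (val_m F M) \<and> val_m G (val_m F M) = M)) \<and>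
      (\<exists>h. polyfun mcoords h \<and> (\<exists>M. h M \<noteq> 0) \<and>
         (\<forall>M. h M \<noteq> 0 \<longrightarrow> regular_m G M \<and> regular_m F (val_m G M) \<and> val_m F (val_m G M) = M)))"

text \<open>Rational maps C^2 --> C^2 (C^2 identified with the diagonal matrices D).\<close>
definition rational_map_v :: "(complex^2 \<Rightarrow> complex^2) \<Rightarrow> bool" where
  "rational_map_v F \<longleftrightarrow> (\<forall>i. rational_fun vcoords (\<lambda>x. F x $ i))"

definition regular_v :: "(complex^2 \<Rightarrow> complex^2) \<Rightarrow> complex^2 \<Rightarrow> bool" where
  "regular_v F x \<longleftrightarrow> (\<forall>i. regular_fun vcoords (\<lambda>y. F y $ i) x)"

definition val_v :: "(complex^2 \<Rightarrow> complex^2) \<Rightarrow> complex^2 \<Rightarrow> complex^2" where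
  "val_v F x = (\<chi> i. rval vcoords (\<lambda>y. F y $ i) x)"

definition birational_v :: "(complex^2 \<Rightarrow> complex^2) \<Rightarrow> bool" where
  "birational_v F \<longleftrightarrow> rational_map_v F \<and>
    (\<exists>G. rational_map_v G \<and>
      (\<exists>h. polyfun vcoords h \<and> (\<exists>x. h x \<noteq> 0) \<and>
         (\<forall>x. h x \<noteq> 0 \<longrightarrow> regular_v F x \<and> regular_v G (val_v F x) \<and> val_v G (val_v F x) = x)) \<and>
      (\<exists>h. polyfun vcoords h \<and> (\<exists>x. h x \<noteq> 0) \<and>
         (\<forall>x. h x \<noteq> 0 \<longrightarrow> regular_v G x \<and> regular_v F (val_v G x) \<and> val_v F (val_v G x) = x)))"

definition compatible_conj :: "(complex^2^2 \<Rightarrow> complex^2^2) \<Rightarrow> bool" where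
  "compatible_conj F \<longleftrightarrow> (\<forall>A M. invertible A \<longrightarrow> regular_m F M \<longrightarrow>
      regular_m F (A ** M ** matrix_inv A) \<longrightarrow>
      A ** val_m F M ** matrix_inv A = val_m F (A ** M ** matrix_inv A))"

definition diag2 :: "complex^2 \<Rightarrow> complex^2^2" where
  "diag2 x = (\<chi> i j. if i = j then x $ i else 0)"

definition restrict_diag :: "(complex^2^2 \<Rightarrow> complex^2^2) \<Rightarrow> complex^2 \<Rightarrow> complex^2" where
  "restrict_diag F x = (\<chi> i. val_m F (diag2 x) $ i $ i)"

end

theory Submission
  imports Defs "HOL-Homology.Invariance_of_Domain"
begin


section \<open>Polynomial functions: basic closure\<close>

lemma pf_minus: "polyfun C f \<Longrightarrow> polyfun C (\<lambda>x. - f x)"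
proof -
  assume "polyfun C f"
  then have "polyfun C (\<lambda>x. (-1) * f x)" by (intro pf_mult pf_const)
  then show ?thesis by simp
qed

lemma pf_diff: "polyfun C f \<Longrightarrow> polyfun C g \<Longrightarrow> polyfun C (\<lambda>x. f x - g x)"
  using pf_add[OF _ pf_minus, of C f g] by simp

lemma pf_pow: "polyfun C f \<Longrightarrow> polyfun C (\<lambda>x. f x ^ n)"
  by (induction n) (auto intro: pf_mult pf_const)

lemma pf_sum: "finite I \<Longrightarrow> (\<And>i. i \<in> I \<Longrightarrow> polyfun C (f i)) \<Longrightarrow> polyfun C (\<lambda>x. \<Sum>i\<in>I. f i x)"
  by (induction I rule: finite_induct) (auto intro: pf_add pf_const)

lemma pf_prod: "finite I \<Longrightarrow> (\<And>i. i \<in> I \<Longrightarrow> polyfun C (f i)) \<Longrightarrow> polyfun C (\<lambda>x. \<Prod>i\<in>I. f i x)"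
  by (induction I rule: finite_induct) (auto intro: pf_mult pf_const)

lemma pf_comp:
  assumes "polyfun C' k" "\<And>c. c \<in> C' \<Longrightarrow> polyfun C (\<lambda>x. c (F x))"
  shows "polyfun C (\<lambda>x. k (F x))"
  using assms(1) by induction (auto intro: pf_const pf_add pf_mult assms(2))

lemma pf_clear:
  assumes "polyfun C' k" "\<And>c. c \<in> C' \<Longrightarrow> \<exists>P. polyfun C P \<and> (\<forall>x. q x \<noteq> 0 \<longrightarrow> c (F x) = P x / q x)"
    and q: "polyfun C q"
  shows "\<exists>K n. polyfun C K \<and> (\<forall>x. q x \<noteq> 0 \<longrightarrow> k (F x) = K x / q x ^ n)"
  using assms(1)
proof induction
  case (pf_const c)
  then show ?case by (intro exI[of _ "\<lambda>x. c"] exI[of _ 0]) (auto intro: polyfun.intros)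
next
  case (pf_coord f)
  then obtain P where "polyfun C P" "\<forall>x. q x \<noteq> 0 \<longrightarrow> f (F x) = P x / q x" using assms(2) by blast
  then show ?case by (intro exI[of _ P] exI[of _ 1]) auto
next
  case (pf_add f g)
  then obtain K n L m where KL: "polyfun C K" "\<forall>x. q x \<noteq> 0 \<longrightarrow> f (F x) = K x / q x ^ n"
    "polyfun C L" "\<forall>x. q x \<noteq> 0 \<longrightarrow> g (F x) = L x / q x ^ m" by blast
  show ?case
  proof (intro exI[of _ "\<lambda>x. K x * q x ^ m + L x * q x ^ n"] exI[of _ "n+m"] conjI allI impI)
    show "polyfun C (\<lambda>x. K x * q x ^ m + L x * q x ^ n)"
      by (intro polyfun.pf_add polyfun.pf_mult pf_pow KL(1) KL(3) q)
    fix x assume "q x \<noteq> 0"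
    then show "f (F x) + g (F x) = (K x * q x ^ m + L x * q x ^ n) / q x ^ (n + m)"
      using KL by (simp add: field_simps power_add)
  qed
next
  case (pf_mult f g)
  then obtain K n L m where KL: "polyfun C K" "\<forall>x. q x \<noteq> 0 \<longrightarrow> f (F x) = K x / q x ^ n"
    "polyfun C L" "\<forall>x. q x \<noteq> 0 \<longrightarrow> g (F x) = L x / q x ^ m" by blast
  show ?case
  proof (intro exI[of _ "\<lambda>x. K x * L x"] exI[of _ "n+m"] conjI allI impI)
    show "polyfun C (\<lambda>x. K x * L x)"
      by (intro polyfun.pf_mult KL(1) KL(3))
    fix x assume "q x \<noteq> 0"
    then have *: "K x = f (F x) * q x ^ n" "L x = g (F x) * q x ^ m" using KL by auto
    show "f (F x) * g (F x) = (K x * L x) / q x ^ (n + m)"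
      using \<open>q x \<noteq> 0\<close> unfolding * by (simp add: power_add)
  qed
qed

lemma clear_raise:
  assumes "polyfun C K" "polyfun C q" "\<forall>x. q x \<noteq> 0 \<longrightarrow> a x = K x / q x ^ n" "n \<le> N"
  shows "\<exists>K'. polyfun C K' \<and> (\<forall>x. q x \<noteq> 0 \<longrightarrow> a x = K' x / q x ^ N)"
proof (intro exI[of _ "\<lambda>x. K x * q x ^ (N - n)"] conjI allI impI)
  show "polyfun C (\<lambda>x. K x * q x ^ (N - n))" using assms by (intro pf_mult pf_pow)
  fix x assume "q x \<noteq> 0"
  moreover have "q x ^ N = q x ^ n * q x ^ (N - n)" using assms(4) by (simp flip: power_add)
  ultimately show "a x = K x * q x ^ (N - n) / q x ^ N" using assms(3) by simp
qed

section \<open>Coordinate systems: density and identity principle\<close>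

locale coords =
  fixes C :: "('a::real_normed_vector \<Rightarrow> complex) set"
  assumes lin: "c \<in> C \<Longrightarrow> c (x + t *\<^sub>R v) = c x + complex_of_real t * c v"
    and cont: "c \<in> C \<Longrightarrow> continuous_on UNIV c"
begin

lemma pf_line: "polyfun C f \<Longrightarrow> \<exists>P. \<forall>t. f (x + t *\<^sub>R v) = poly P (complex_of_real t)"
proof (induction rule: polyfun.induct)
  case (pf_const c)
  then show ?case by (intro exI[of _ "[:c:]"]) simp
next
  case (pf_coord f)
  then show ?case by (intro exI[of _ "[:f x, f v:]"]) (simp add: lin mult.commute)
next
  case (pf_add f g)
  then obtain P Q where "\<forall>t. f (x + t *\<^sub>R v) = poly P (complex_of_real t)"
    "\<forall>t. g (x + t *\<^sub>R v) = poly Q (complex_of_real t)" by blast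
  then show ?case by (intro exI[of _ "P + Q"]) simp
next
  case (pf_mult f g)
  then obtain P Q where "\<forall>t. f (x + t *\<^sub>R v) = poly P (complex_of_real t)"
    "\<forall>t. g (x + t *\<^sub>R v) = poly Q (complex_of_real t)" by blast
  then show ?case by (intro exI[of _ "P * Q"]) simp
qed

lemma pf_cont: "polyfun C f \<Longrightarrow> continuous_on UNIV f"
  by (induction rule: polyfun.induct) (auto intro: continuous_on_add continuous_on_mult cont continuous_on_const)

lemma pf_open: "polyfun C f \<Longrightarrow> open {x. f x \<noteq> 0}"
  by (rule open_Collect_neq[OF pf_cont continuous_on_const])

lemma pf_dense:
  assumes h: "polyfun C h" "h y \<noteq> 0" and S: "open S" "x \<in> S"
  shows "\<exists>z\<in>S. h z \<noteq> 0"
proof -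
  obtain P where P: "\<forall>t. h (x + t *\<^sub>R (y - x)) = poly P (complex_of_real t)"
    using pf_line[OF h(1)] by blast
  have "poly P 1 = h y" using P[rule_format, of 1] by simp
  then have "P \<noteq> 0" using h(2) by auto
  then have fin: "finite {z. poly P z = 0}" by (rule poly_roots_finite)
  have "inj complex_of_real" by (auto simp: inj_on_def)
  from finite_vimageI[OF fin this]
  have "finite {t::real. poly P (complex_of_real t) = 0}" by (simp add: vimage_def)
  obtain e where e: "e > 0" "ball x e \<subseteq> S" using S open_contains_ball by blast
  define d where "d = e / (norm (y - x) + 1)"
  have d: "d > 0" using e by (auto simp: d_def intro!: divide_pos_pos add_nonneg_pos)
  have "infinite {0<..<d}" using d by simp
  then obtain t where t: "t \<in> {0<..<d}" "poly P (complex_of_real t) \<noteq> 0"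
    using \<open>finite {t::real. poly P (complex_of_real t) = 0}\<close>
    by (metis (mono_tags, lifting) Diff_infinite_finite ex_in_conv finite.emptyI mem_Collect_eq DiffE infinite_imp_nonempty)
  have "norm (t *\<^sub>R (y - x)) = t * norm (y - x)" using t by simp
  also have "\<dots> \<le> d * norm (y - x)" using t by (intro mult_right_mono) auto
  also have "\<dots> < e"
  proof -
    have n1: "norm (y - x) + 1 > 0" by (simp add: add_nonneg_pos)
    have "d * norm (y - x) = e * norm (y - x) / (norm (y - x) + 1)" by (simp add: d_def)
    also have "\<dots> < e" using n1 e by (simp add: pos_divide_less_eq algebra_simps)
    finally show ?thesis .
  qed
  finally have "x + t *\<^sub>R (y - x) \<in> ball x e" by (simp add: dist_norm)
  then have "x + t *\<^sub>R (y - x) \<in> S" using e by blast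
  moreover have "h (x + t *\<^sub>R (y - x)) \<noteq> 0" using t P by simp
  ultimately show ?thesis by blast
qed

lemma pf_both:
  assumes "polyfun C h1" "polyfun C h2" "h1 a \<noteq> 0" "h2 b \<noteq> 0"
  shows "\<exists>x. h1 x \<noteq> 0 \<and> h2 x \<noteq> 0"
  using pf_dense[OF assms(2,4) pf_open[OF assms(1)], of a] assms(3) by auto

lemma pf_zero:
  assumes "polyfun C p" "polyfun C h" "h y \<noteq> 0" "\<And>z. h z \<noteq> 0 \<Longrightarrow> p z = 0"
  shows "p x = 0"
proof (rule ccontr)
  assume "p x \<noteq> 0"
  then obtain z where "p z \<noteq> 0" "h z \<noteq> 0" using pf_both[OF assms(1,2)] assms(3) by blast
  then show False using assms(4) by blast
qed

end


context coords begin

definition gen :: "('a \<Rightarrow> bool) \<Rightarrow> bool" where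
  "gen P \<longleftrightarrow> (\<exists>h. polyfun C h \<and> (\<exists>x. h x \<noteq> 0) \<and> (\<forall>x. h x \<noteq> 0 \<longrightarrow> P x))"

lemma gen_poly: "polyfun C h \<Longrightarrow> h y \<noteq> 0 \<Longrightarrow> gen (\<lambda>x. h x \<noteq> 0)"
  unfolding gen_def by blast

lemma gen_mono: "gen P \<Longrightarrow> (\<And>x. P x \<Longrightarrow> Q x) \<Longrightarrow> gen Q"
  unfolding gen_def by blast

lemma gen_conj: "gen P \<Longrightarrow> gen Q \<Longrightarrow> gen (\<lambda>x. P x \<and> Q x)"
proof -
  assume "gen P" "gen Q"
  then obtain h a k b where h: "polyfun C h" "h a \<noteq> 0" "\<forall>x. h x \<noteq> 0 \<longrightarrow> P x"
    and k: "polyfun C k" "k b \<noteq> 0" "\<forall>x. k x \<noteq> 0 \<longrightarrow> Q x"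
    unfolding gen_def by metis
  obtain z where z: "h z \<noteq> 0" "k z \<noteq> 0" using pf_both[OF h(1) k(1) h(2) k(2)] by blast
  have "polyfun C (\<lambda>x. h x * k x)" using h(1) k(1) by (rule pf_mult)
  moreover have "h z * k z \<noteq> 0" using z by simp
  moreover have "\<forall>x. h x * k x \<noteq> 0 \<longrightarrow> P x \<and> Q x" using h(3) k(3) by simp
  ultimately show ?thesis unfolding gen_def by blast
qed

lemma gen_ex: "gen P \<Longrightarrow> \<exists>x. P x"
  unfolding gen_def by blast

lemma gen_open: "gen P \<Longrightarrow> open S \<Longrightarrow> x \<in> S \<Longrightarrow> \<exists>z\<in>S. P z"
  unfolding gen_def using pf_dense by blast

lemma gen_ident: "polyfun C p \<Longrightarrow> gen (\<lambda>x. p x = 0) \<Longrightarrow> p x = 0"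
  unfolding gen_def using pf_zero by blast

lemma gen_ball: "finite I \<Longrightarrow> (\<And>i. i \<in> I \<Longrightarrow> gen (P i)) \<Longrightarrow> gen (\<lambda>x. \<forall>i\<in>I. P i x)"
proof (induction I rule: finite_induct)
  case empty
  then show ?case unfolding gen_def by (intro exI[of _ "\<lambda>x. 1"]) (auto intro: pf_const)
next
  case (insert a F)
  then show ?case using gen_conj[of "P a" "\<lambda>x. \<forall>i\<in>F. P i x"] by (auto elim: gen_mono)
qed

lemma gen_ratrep: "ratrep C F p q \<Longrightarrow> gen (\<lambda>x. q x \<noteq> 0 \<and> F x = p x / q x)"
  unfolding ratrep_def gen_def by blast

lemma ratrep_intro: "polyfun C p \<Longrightarrow> polyfun C q \<Longrightarrow> gen (\<lambda>x. q x \<noteq> 0 \<and> F x = p x / q x) \<Longrightarrow> ratrep C F p q"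
  unfolding ratrep_def gen_def by blast

lemma ratrep_W:
  assumes "ratrep C F p q" "ratrep C F p' q'" "q x \<noteq> 0" "q' x \<noteq> 0"
  shows "p x / q x = p' x / q' x"
proof -
  have pf: "polyfun C (\<lambda>x. p x * q' x - p' x * q x)"
    using assms(1,2) unfolding ratrep_def by (intro pf_diff pf_mult) auto
  have "gen (\<lambda>x. (q x \<noteq> 0 \<and> F x = p x / q x) \<and> (q' x \<noteq> 0 \<and> F x = p' x / q' x))"
    using gen_conj[OF gen_ratrep[OF assms(1)] gen_ratrep[OF assms(2)]] .
  then have "gen (\<lambda>x. p x * q' x - p' x * q x = 0)"
    by (rule gen_mono) (auto simp: field_simps)
  from gen_ident[OF pf this] have "p x * q' x - p' x * q x = 0" .
  then show ?thesis using assms(3,4) by (simp add: field_simps)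
qed

lemma rval_rep:
  assumes "ratrep C F p q" "q x \<noteq> 0"
  shows "regular_fun C F x" "rval C F x = p x / q x"
proof -
  show "regular_fun C F x" using assms unfolding regular_fun_def by blast
  have "\<exists>v. \<exists>p q. ratrep C F p q \<and> q x \<noteq> 0 \<and> v = p x / q x" using assms by blast
  then have "\<exists>p' q'. ratrep C F p' q' \<and> q' x \<noteq> 0 \<and> rval C F x = p' x / q' x"
    unfolding rval_def by (rule someI_ex)
  then show "rval C F x = p x / q x" using ratrep_W assms by metis
qed

lemma regular_rep: "regular_fun C F x \<Longrightarrow> \<exists>p q. ratrep C F p q \<and> q x \<noteq> 0"
  unfolding regular_fun_def by blast

lemma ratrep_mult:
  assumes "ratrep C F p q" "polyfun C r" "r y \<noteq> 0"
  shows "ratrep C F (\<lambda>x. p x * r x) (\<lambda>x. q x * r x)"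
proof (rule ratrep_intro)
  show "polyfun C (\<lambda>x. p x * r x)" "polyfun C (\<lambda>x. q x * r x)"
    using assms unfolding ratrep_def by (auto intro: pf_mult)
  show "gen (\<lambda>x. q x * r x \<noteq> 0 \<and> F x = p x * r x / (q x * r x))"
    using gen_conj[OF gen_ratrep[OF assms(1)] gen_poly[OF assms(2,3)]] by (rule gen_mono) auto
qed

lemma ratrep_cong:
  assumes "ratrep C F p q" "gen (\<lambda>x. F x = F' x)" shows "ratrep C F' p q"
proof (rule ratrep_intro)
  show "polyfun C p" "polyfun C q" using assms(1) unfolding ratrep_def by auto
  show "gen (\<lambda>x. q x \<noteq> 0 \<and> F' x = p x / q x)"
    using gen_conj[OF gen_ratrep[OF assms(1)] assms(2)] by (rule gen_mono) auto
qed

end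


locale space = coords C for C :: "('a::euclidean_space \<Rightarrow> complex) set" +
  fixes val :: "('a \<Rightarrow> 'a) \<Rightarrow> 'a \<Rightarrow> 'a"
  assumes finC: "finite C" and neC: "C \<noteq> {}"
    and sep: "(\<And>c. c \<in> C \<Longrightarrow> c x = c y) \<Longrightarrow> x = y"
    and valc: "c \<in> C \<Longrightarrow> c (val F x) = rval C (\<lambda>y. c (F y)) x"
    and contc: "(\<And>c. c \<in> C \<Longrightarrow> continuous_on U (\<lambda>x. c ((g::'a \<Rightarrow> 'a) x))) \<Longrightarrow> continuous_on U g"
begin

definition ratmap :: "('a \<Rightarrow> 'a) \<Rightarrow> bool" where
  "ratmap F \<longleftrightarrow> (\<forall>c\<in>C. rational_fun C (\<lambda>x. c (F x)))"

definition reg :: "('a \<Rightarrow> 'a) \<Rightarrow> 'a \<Rightarrow> bool" where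
  "reg F x \<longleftrightarrow> (\<forall>c\<in>C. regular_fun C (\<lambda>y. c (F y)) x)"

definition bir :: "('a \<Rightarrow> 'a) \<Rightarrow> bool" where
  "bir F \<longleftrightarrow> ratmap F \<and> (\<exists>G. ratmap G \<and>
      gen (\<lambda>x. reg F x \<and> reg G (val F x) \<and> val G (val F x) = x) \<and>
      gen (\<lambda>x. reg G x \<and> reg F (val G x) \<and> val F (val G x) = x))"

definition isrep :: "('a \<Rightarrow> 'a) \<Rightarrow> (('a \<Rightarrow> complex) \<Rightarrow> 'a \<Rightarrow> complex) \<Rightarrow> ('a \<Rightarrow> complex) \<Rightarrow> bool" where
  "isrep F P q \<longleftrightarrow> (\<forall>c\<in>C. ratrep C (\<lambda>y. c (F y)) (P c) q)"

lemma isrep_val: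
  assumes "isrep F P q" "q x \<noteq> 0"
  shows "reg F x" "\<And>c. c \<in> C \<Longrightarrow> c (val F x) = P c x / q x"
proof -
  fix c assume "c \<in> C"
  then have "ratrep C (\<lambda>y. c (F y)) (P c) q" using assms(1) unfolding isrep_def by blast
  from rval_rep[OF this assms(2)] valc[OF \<open>c \<in> C\<close>]
  show "c (val F x) = P c x / q x" by simp
next
  show "reg F x" unfolding reg_def
  proof
    fix c assume "c \<in> C"
    then have "ratrep C (\<lambda>y. c (F y)) (P c) q" using assms(1) unfolding isrep_def by blast
    from rval_rep[OF this assms(2)] show "regular_fun C (\<lambda>y. c (F y)) x" by simp
  qed
qed

lemma isrep_pf:
  assumes "isrep F P q"
  shows "polyfun C q" "c \<in> C \<Longrightarrow> polyfun C (P c)" "\<exists>x. q x \<noteq> 0"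
proof -
  obtain c0 where "c0 \<in> C" using neC by blast
  then show "polyfun C q" "\<exists>x. q x \<noteq> 0" using assms unfolding isrep_def ratrep_def by auto
  show "c \<in> C \<Longrightarrow> polyfun C (P c)" using assms unfolding isrep_def ratrep_def by auto
qed

lemma isrep_ratmap: "isrep F P q \<Longrightarrow> ratmap F"
  unfolding isrep_def ratmap_def rational_fun_def by blast

lemma isrep_gen: "isrep F P q \<Longrightarrow> gen (\<lambda>x. q x \<noteq> 0)"
  using isrep_pf gen_poly by blast

lemma crep_gen:
  assumes "\<forall>c\<in>C. ratrep C (\<lambda>y. c (F y)) (pp c) (qq c)" "\<forall>c\<in>C. qq c x0 \<noteq> 0"
  shows "\<exists>P q. isrep F P q \<and> q x0 \<noteq> 0"
proof -
  define q where "q = (\<lambda>x. \<Prod>c\<in>C. qq c x)"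
  define P where "P = (\<lambda>c x. pp c x * (\<Prod>c'\<in>C - {c}. qq c' x))"
  have "isrep F P q" unfolding isrep_def
  proof
    fix c assume c: "c \<in> C"
    have r: "polyfun C (\<lambda>x. \<Prod>c'\<in>C - {c}. qq c' x)"
      using assms(1) finC by (intro pf_prod) (auto simp: ratrep_def)
    have "(\<Prod>c'\<in>C - {c}. qq c' x0) \<noteq> 0" using assms(2) finC by auto
    from ratrep_mult[OF assms(1)[rule_format, OF c] r this]
    have "ratrep C (\<lambda>y. c (F y)) (\<lambda>x. pp c x * (\<Prod>c'\<in>C - {c}. qq c' x))
          (\<lambda>x. qq c x * (\<Prod>c'\<in>C - {c}. qq c' x))" .
    moreover have "(\<lambda>x. qq c x * (\<Prod>c'\<in>C - {c}. qq c' x)) = q"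
      unfolding q_def using c finC by (auto simp: prod.remove)
    ultimately show "ratrep C (\<lambda>y. c (F y)) (P c) q" unfolding P_def by simp
  qed
  moreover have "q x0 \<noteq> 0" unfolding q_def using assms(2) finC by auto
  ultimately show ?thesis by blast
qed

lemma crep_at:
  assumes "reg F x0" shows "\<exists>P q. isrep F P q \<and> q x0 \<noteq> 0"
proof -
  have "\<forall>c\<in>C. \<exists>p q. ratrep C (\<lambda>y. c (F y)) p q \<and> q x0 \<noteq> 0"
    using assms unfolding reg_def regular_fun_def by blast
  then obtain pp qq where "\<forall>c\<in>C. ratrep C (\<lambda>y. c (F y)) (pp c) (qq c) \<and> qq c x0 \<noteq> 0"
    by metis
  then show ?thesis using crep_gen[of F pp qq x0] by blast
qed

lemma crep:
  assumes "ratmap F" shows "\<exists>P q. isrep F P q"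
proof -
  have "\<forall>c\<in>C. \<exists>p q. ratrep C (\<lambda>y. c (F y)) p q"
    using assms unfolding ratmap_def rational_fun_def by blast
  then obtain pp qq where pq: "\<forall>c\<in>C. ratrep C (\<lambda>y. c (F y)) (pp c) (qq c)"
    by metis
  have "gen (\<lambda>x. \<forall>c\<in>C. qq c x \<noteq> 0)"
    using gen_ball[OF finC, of "\<lambda>c x. qq c x \<noteq> 0"] gen_ratrep pq
    by (metis (no_types, lifting) gen_mono)
  then obtain x0 where "\<forall>c\<in>C. qq c x0 \<noteq> 0" using gen_ex by blast
  then show ?thesis using crep_gen[OF pq] by blast
qed

lemma isrep_clear:
  assumes "isrep F P q" "polyfun C k"
  shows "\<exists>K n. polyfun C K \<and> (\<forall>x. q x \<noteq> 0 \<longrightarrow> k (val F x) = K x / q x ^ n)"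
proof (rule pf_clear[OF assms(2) _ isrep_pf(1)[OF assms(1)]])
  fix c assume "c \<in> C"
  then show "\<exists>P. polyfun C P \<and> (\<forall>x. q x \<noteq> 0 \<longrightarrow> c (val F x) = P x / q x)"
    using isrep_val[OF assms(1)] isrep_pf(2)[OF assms(1)] by blast
qed

lemma comp_gen:
  assumes "isrep F P q" "polyfun C k" "q x1 \<noteq> 0" "k (val F x1) \<noteq> 0"
  shows "gen (\<lambda>x. q x \<noteq> 0 \<and> k (val F x) \<noteq> 0)"
proof -
  obtain K n where K: "polyfun C K" "\<forall>x. q x \<noteq> 0 \<longrightarrow> k (val F x) = K x / q x ^ n"
    using isrep_clear[OF assms(1,2)] by blast
  have "polyfun C (\<lambda>x. q x * K x)" using K(1) isrep_pf(1)[OF assms(1)] by (intro pf_mult)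
  moreover have "q x1 * K x1 \<noteq> 0" using assms(3,4) K(2) by auto
  ultimately have "gen (\<lambda>x. q x * K x \<noteq> 0)" by (rule gen_poly)
  then show ?thesis by (rule gen_mono) (use K(2) in auto)
qed

lemma dominant:
  assumes F: "ratmap F" and inv: "gen (\<lambda>x. val G (val F x) = x)"
    and k: "polyfun C k" "k z0 \<noteq> 0"
  shows "gen (\<lambda>x. k (val F x) \<noteq> 0)"
proof -
  obtain P q where rep: "isrep F P q" using crep[OF F] by blast
  obtain h0 a where h0: "polyfun C h0" "h0 a \<noteq> 0" "\<forall>x. h0 x \<noteq> 0 \<longrightarrow> val G (val F x) = x"
    using inv unfolding gen_def by blast
  define U where "U = {x. q x * h0 x \<noteq> 0}"
  have pq: "polyfun C (\<lambda>x. q x * h0 x)" using isrep_pf(1)[OF rep] h0(1) by (rule pf_mult)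
  have oU: "open U" unfolding U_def by (rule pf_open[OF pq])
  obtain b where "q b \<noteq> 0" using isrep_pf(3)[OF rep] by blast
  then obtain u where "q u \<noteq> 0" "h0 u \<noteq> 0" using pf_both[OF isrep_pf(1)[OF rep] h0(1)] h0(2) by blast
  then have u: "u \<in> U" unfolding U_def by simp
  have cont: "continuous_on U (val F)"
  proof (rule contc)
    fix c assume c: "c \<in> C"
    have "continuous_on U (\<lambda>x. P c x / q x)"
      using pf_cont[OF isrep_pf(2)[OF rep c]] pf_cont[OF isrep_pf(1)[OF rep]]
      by (intro continuous_on_divide) (auto simp: U_def elim: continuous_on_subset)
    then show "continuous_on U (\<lambda>x. c (val F x))"
      by (rule continuous_on_cong[THEN iffD1, rotated 2]) (auto simp: U_def isrep_val(2)[OF rep _ c])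
  qed
  have inj: "inj_on (val F) U"
    by (rule inj_on_inverseI[of _ "val G"]) (use h0(3) in \<open>auto simp: U_def\<close>)
  have "open (val F ` U)" by (rule invariance_of_domain[OF cont oU inj])
  then obtain w where "w \<in> val F ` U" "k w \<noteq> 0" using pf_dense[OF k] u by blast
  then obtain x1 where x1: "x1 \<in> U" "k (val F x1) \<noteq> 0" by blast
  then have "q x1 \<noteq> 0" unfolding U_def by simp
  from comp_gen[OF rep k(1) this x1(2)] show ?thesis by (rule gen_mono) simp
qed

end


lemma vcoords_iff: "c \<in> vcoords \<longleftrightarrow> (\<exists>i. c = (\<lambda>x. x $ i))"
  unfolding vcoords_def by auto

lemma mcoords_iff: "c \<in> mcoords \<longleftrightarrow> (\<exists>i j. c = (\<lambda>M. M $ i $ j))"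
  unfolding mcoords_def by auto

lemma ball_vcoords: "(\<forall>c\<in>vcoords. P c) \<longleftrightarrow> (\<forall>i. P (\<lambda>x. x $ i))"
  unfolding vcoords_def by blast

lemma ball_mcoords: "(\<forall>c\<in>mcoords. P c) \<longleftrightarrow> (\<forall>i j. P (\<lambda>M. M $ i $ j))"
  unfolding mcoords_def by blast

lemma pfv: "polyfun vcoords (\<lambda>x. x $ i)"
  by (rule pf_coord) (auto simp: vcoords_iff)

lemma pfm: "polyfun mcoords (\<lambda>M. M $ i $ j)"
  by (rule pf_coord) (auto simp: mcoords_iff)

interpretation V: space vcoords val_v
proof
  fix c :: "complex^2 \<Rightarrow> complex" and x v :: "complex^2" and t :: real
  assume "c \<in> vcoords"
  then obtain i where c: "c = (\<lambda>x. x $ i)" by (auto simp: vcoords_iff)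
  show "c (x + t *\<^sub>R v) = c x + complex_of_real t * c v" unfolding c vector_add_component vector_scaleR_component by (simp add: scaleR_conv_of_real)
  show "continuous_on UNIV c" unfolding c by (intro continuous_intros)
next
  have "vcoords = range (\<lambda>i x. x $ i)" unfolding vcoords_def by auto
  then show "finite vcoords" using finite_imageI[OF finite_class.finite_UNIV] by metis
  show "vcoords \<noteq> {}" unfolding vcoords_def by blast
next
  fix x y :: "complex^2" assume "\<And>c. c \<in> vcoords \<Longrightarrow> c x = c y"
  then show "x = y" by (auto simp: vec_eq_iff vcoords_iff)
next
  fix c :: "complex^2 \<Rightarrow> complex" and F x assume "c \<in> vcoords"
  then show "c (val_v F x) = rval vcoords (\<lambda>y. c (F y)) x"
    by (auto simp: vcoords_iff val_v_def)
next
  fix U and g :: "complex^2 \<Rightarrow> complex^2"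
  assume "\<And>c. c \<in> vcoords \<Longrightarrow> continuous_on U (\<lambda>x. c (g x))"
  then have "continuous_on U (\<lambda>x. \<chi> i. g x $ i)"
    by (intro continuous_on_vec_lambda) (auto simp: vcoords_iff)
  then show "continuous_on U g" by simp
qed

interpretation M: space mcoords val_m
proof
  fix c :: "complex^2^2 \<Rightarrow> complex" and x v :: "complex^2^2" and t :: real
  assume "c \<in> mcoords"
  then obtain i j where c: "c = (\<lambda>x. x $ i $ j)" by (auto simp: mcoords_iff)
  show "c (x + t *\<^sub>R v) = c x + complex_of_real t * c v" unfolding c vector_add_component vector_scaleR_component by (simp add: scaleR_conv_of_real)
  show "continuous_on UNIV c" unfolding c by (intro continuous_intros)
next
  have "mcoords = (\<lambda>(i,j). (\<lambda>M. M $ i $ j)) ` UNIV" unfolding mcoords_def by auto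
  then show "finite mcoords" using finite_imageI[OF finite_class.finite_UNIV] by metis
  show "mcoords \<noteq> {}" unfolding mcoords_def by blast
next
  fix x y :: "complex^2^2" assume "\<And>c. c \<in> mcoords \<Longrightarrow> c x = c y"
  then show "x = y" by (auto simp: vec_eq_iff mcoords_iff)
next
  fix c :: "complex^2^2 \<Rightarrow> complex" and F x assume "c \<in> mcoords"
  then show "c (val_m F x) = rval mcoords (\<lambda>y. c (F y)) x"
    by (auto simp: mcoords_iff val_m_def)
next
  fix U and g :: "complex^2^2 \<Rightarrow> complex^2^2"
  assume "\<And>c. c \<in> mcoords \<Longrightarrow> continuous_on U (\<lambda>x. c (g x))"
  then have "continuous_on U (\<lambda>x. \<chi> i j. g x $ i $ j)"
    by (intro continuous_on_vec_lambda) (auto simp: mcoords_iff)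
  then show "continuous_on U g" by simp
qed

lemma V_ratmap: "V.ratmap F \<longleftrightarrow> rational_map_v F"
  unfolding V.ratmap_def rational_map_v_def ball_vcoords ..
lemma V_reg: "V.reg F x \<longleftrightarrow> regular_v F x"
  unfolding V.reg_def regular_v_def ball_vcoords ..
lemma V_bir: "V.bir F \<longleftrightarrow> birational_v F"
  unfolding V.bir_def birational_v_def V.gen_def V_ratmap V_reg ..
lemma M_ratmap: "M.ratmap F \<longleftrightarrow> rational_map_m F"
  unfolding M.ratmap_def rational_map_m_def ball_mcoords ..
lemma M_reg: "M.reg F x \<longleftrightarrow> regular_m F x"
  unfolding M.reg_def regular_m_def ball_mcoords ..
lemma M_bir: "M.bir F \<longleftrightarrow> birational_m F"
  unfolding M.bir_def birational_m_def M.gen_def M_ratmap M_reg ..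


lemma vec2_eq: "(x::'a^2) = y \<longleftrightarrow> x $ 1 = y $ 1 \<and> x $ 2 = y $ 2"
  by (simp add: vec_eq_iff forall_2)

definition phi :: "(complex^2 \<Rightarrow> complex) \<Rightarrow> (complex^2 \<Rightarrow> complex) \<Rightarrow> (complex^2 \<Rightarrow> complex) \<Rightarrow> complex^2 \<Rightarrow> complex^2" where
  "phi \<alpha> \<beta> \<delta> y = vector [(\<alpha> y * y$1 + 2 * \<beta> y) / \<delta> y,
       (\<alpha> y ^ 2 * y$2 + \<alpha> y * \<beta> y * y$1 + \<beta> y ^ 2) / \<delta> y ^ 2]"

definition psi :: "(complex^2 \<Rightarrow> complex) \<Rightarrow> (complex^2 \<Rightarrow> complex) \<Rightarrow> (complex^2 \<Rightarrow> complex) \<Rightarrow> complex^2 \<Rightarrow> complex^2" where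
  "psi u1 u2 v w = vector [u1 w / v w, u2 w / v w]"

definition MID :: "(complex^2 \<Rightarrow> complex) \<Rightarrow> (complex^2 \<Rightarrow> complex) \<Rightarrow> (complex^2 \<Rightarrow> complex) \<Rightarrow> bool" where
  "MID \<alpha> \<beta> \<delta> \<longleftrightarrow> (\<exists>u1 u2 v. polyfun vcoords u1 \<and> polyfun vcoords u2 \<and> polyfun vcoords v \<and>
     V.gen (\<lambda>y. \<delta> y \<noteq> 0 \<and> \<alpha> y \<noteq> 0 \<and> v (phi \<alpha> \<beta> \<delta> y) \<noteq> 0 \<and> psi u1 u2 v (phi \<alpha> \<beta> \<delta> y) = y) \<and>
     V.gen (\<lambda>w. v w \<noteq> 0 \<and> \<delta> (psi u1 u2 v w) \<noteq> 0 \<and> \<alpha> (psi u1 u2 v w) \<noteq> 0 \<and> phi \<alpha> \<beta> \<delta> (psi u1 u2 v w) = w))"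

lemma psi_clear:
  assumes "polyfun vcoords u1" "polyfun vcoords u2" "polyfun vcoords v" "polyfun vcoords k"
  shows "\<exists>K n. polyfun vcoords K \<and> (\<forall>w. v w \<noteq> 0 \<longrightarrow> k (psi u1 u2 v w) = K w / v w ^ n)"
proof (rule pf_clear[OF assms(4) _ assms(3)])
  fix c :: "complex^2 \<Rightarrow> complex" assume "c \<in> vcoords"
  then obtain i where c: "c = (\<lambda>x. x $ i)" by (auto simp: vcoords_iff)
  show "\<exists>P. polyfun vcoords P \<and> (\<forall>x. v x \<noteq> 0 \<longrightarrow> c (psi u1 u2 v x) = P x / v x)"
  proof (cases "i = 1")
    case True
    then show ?thesis using assms by (intro exI[of _ u1]) (auto simp: c psi_def)
  next
    case False
    then have "i = 2" using exhaust_2 by blast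
    then show ?thesis using assms by (intro exI[of _ u2]) (auto simp: c psi_def)
  qed
qed

lemma psi_clear_N:
  assumes "polyfun vcoords u1" "polyfun vcoords u2" "polyfun vcoords v" "polyfun vcoords k"
  shows "\<exists>n0. \<forall>N\<ge>n0. \<exists>K. polyfun vcoords K \<and> (\<forall>w. v w \<noteq> 0 \<longrightarrow> k (psi u1 u2 v w) = K w / v w ^ N)"
proof -
  obtain K n where K: "polyfun vcoords K" "\<forall>w. v w \<noteq> 0 \<longrightarrow> k (psi u1 u2 v w) = K w / v w ^ n"
    using psi_clear[OF assms] by blast
  show ?thesis
    by (rule exI[of _ n]) (use clear_raise[OF K(1) assms(3) K(2)] in blast)
qed

locale sigspace = space C val for C :: "('a::euclidean_space \<Rightarrow> complex) set" and val +
  fixes sig :: "'a \<Rightarrow> complex^2" and aff :: "complex \<Rightarrow> complex \<Rightarrow> 'a \<Rightarrow> 'a"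
    and e :: "('a \<Rightarrow> complex) \<Rightarrow> complex" and ns :: "'a \<Rightarrow> complex"
  assumes sig_pf: "polyfun C (\<lambda>x. sig x $ i)"
    and sig_surj: "\<exists>x. sig x = y"
    and aff_c: "c \<in> C \<Longrightarrow> c (aff a b x) = a * c x + b * e c"
    and sig_aff: "sig (aff a b x) = vector [a * sig x $ 1 + 2*b, a^2 * sig x $ 2 + a * b * sig x $ 1 + b^2]"
    and ns_pf: "polyfun C ns" and ns_nz: "\<exists>x. ns x \<noteq> 0" and ns_aff: "ns (aff a b x) = a * ns x"
begin

lemma pf_sig: "polyfun vcoords k \<Longrightarrow> polyfun C (\<lambda>x. k (sig x))"
  by (rule pf_comp) (auto simp: vcoords_iff sig_pf)

lemma pull: "V.gen P \<Longrightarrow> gen (\<lambda>x. P (sig x))"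
proof -
  assume "V.gen P"
  then obtain h y0 where h: "polyfun vcoords h" "h y0 \<noteq> 0" "\<forall>y. h y \<noteq> 0 \<longrightarrow> P y"
    unfolding V.gen_def by blast
  obtain x0 where "sig x0 = y0" using sig_surj by blast
  then show ?thesis unfolding gen_def using h pf_sig[OF h(1)]
    by (intro exI[of _ "\<lambda>x. h (sig x)"]) auto
qed

lemma transfer0:
  assumes "polyfun vcoords E" "gen (\<lambda>x. E (sig x) = 0)" shows "E y = 0"
proof -
  obtain x where "sig x = y" using sig_surj by blast
  with gen_ident[OF pf_sig[OF assms(1)] assms(2)] show ?thesis by blast
qed

lemma transfer_nz: "polyfun vcoords E \<Longrightarrow> E (sig x) \<noteq> 0 \<Longrightarrow> V.gen (\<lambda>y. E y \<noteq> 0)"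
  by (rule V.gen_poly)

lemma aff_eq: "(\<And>c. c \<in> C \<Longrightarrow> c z = a * c x + b * e c) \<Longrightarrow> z = aff a b x"
  by (rule sep) (simp add: aff_c)

lemma sig_aff_phi:
  assumes "\<delta> y \<noteq> 0" "sig x = y"
  shows "sig (aff (\<alpha> y / \<delta> y) (\<beta> y / \<delta> y) x) = phi \<alpha> \<beta> \<delta> y"
  using assms unfolding sig_aff phi_def by (simp add: vec2_eq field_simps power2_eq_square)

theorem mid_bir:
  assumes F: "ratmap F"
    and pf: "polyfun vcoords \<alpha>" "polyfun vcoords \<beta>" "polyfun vcoords \<delta>"
    and st: "\<And>x. \<delta> (sig x) \<noteq> 0 \<Longrightarrow> reg F x \<and> val F x = aff (\<alpha> (sig x) / \<delta> (sig x)) (\<beta> (sig x) / \<delta> (sig x)) x"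
    and mid: "MID \<alpha> \<beta> \<delta>"
  shows "bir F"
proof -
  obtain u1 u2 v where u: "polyfun vcoords u1" "polyfun vcoords u2" "polyfun vcoords v"
    and m1: "V.gen (\<lambda>y. \<delta> y \<noteq> 0 \<and> \<alpha> y \<noteq> 0 \<and> v (phi \<alpha> \<beta> \<delta> y) \<noteq> 0 \<and> psi u1 u2 v (phi \<alpha> \<beta> \<delta> y) = y)"
    and m2: "V.gen (\<lambda>w. v w \<noteq> 0 \<and> \<delta> (psi u1 u2 v w) \<noteq> 0 \<and> \<alpha> (psi u1 u2 v w) \<noteq> 0 \<and> phi \<alpha> \<beta> \<delta> (psi u1 u2 v w) = w)"
    using mid unfolding MID_def by blast
  let ?p = "psi u1 u2 v"
  obtain na where na: "\<forall>N\<ge>na. \<exists>K. polyfun vcoords K \<and> (\<forall>w. v w \<noteq> 0 \<longrightarrow> \<alpha> (?p w) = K w / v w ^ N)"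
    using psi_clear_N[OF u pf(1)] by blast
  obtain nb where nb: "\<forall>N\<ge>nb. \<exists>K. polyfun vcoords K \<and> (\<forall>w. v w \<noteq> 0 \<longrightarrow> \<beta> (?p w) = K w / v w ^ N)"
    using psi_clear_N[OF u pf(2)] by blast
  obtain nd where nd: "\<forall>N\<ge>nd. \<exists>K. polyfun vcoords K \<and> (\<forall>w. v w \<noteq> 0 \<longrightarrow> \<delta> (?p w) = K w / v w ^ N)"
    using psi_clear_N[OF u pf(3)] by blast
  define N where "N = na + nb + nd"
  have Nle: "na \<le> N" "nb \<le> N" "nd \<le> N" unfolding N_def by auto
  obtain Ka where Ka: "polyfun vcoords Ka" "\<forall>w. v w \<noteq> 0 \<longrightarrow> \<alpha> (?p w) = Ka w / v w ^ N"
    using na Nle by blast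
  obtain Kb where Kb: "polyfun vcoords Kb" "\<forall>w. v w \<noteq> 0 \<longrightarrow> \<beta> (?p w) = Kb w / v w ^ N"
    using nb Nle by blast
  obtain Kd where Kd: "polyfun vcoords Kd" "\<forall>w. v w \<noteq> 0 \<longrightarrow> \<delta> (?p w) = Kd w / v w ^ N"
    using nd Nle by blast
  define G where "G = (\<lambda>x. aff (\<delta> (?p (sig x)) / \<alpha> (?p (sig x))) (- \<beta> (?p (sig x)) / \<alpha> (?p (sig x))) x)"
  define P where "P = (\<lambda>c x. Kd (sig x) * c x - Kb (sig x) * e c)"
  define q where "q = (\<lambda>x. Ka (sig x))"
  have good2: "v w \<noteq> 0 \<and> Ka w \<noteq> 0" if "v w \<noteq> 0" "\<alpha> (?p w) \<noteq> 0" for w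
    using that Ka(2) by auto
  have Gval: "c (G x) = P c x / q x" if "c \<in> C" "v (sig x) \<noteq> 0" "Ka (sig x) \<noteq> 0" for c x
  proof -
    have "c (G x) = \<delta> (?p (sig x)) / \<alpha> (?p (sig x)) * c x + - \<beta> (?p (sig x)) / \<alpha> (?p (sig x)) * e c"
      unfolding G_def using aff_c[OF that(1)] by simp
    also have "\<dots> = P c x / q x"
    proof -
      have a: "\<alpha> (?p (sig x)) = Ka (sig x) / v (sig x) ^ N" using Ka(2) that by blast
      have b: "\<beta> (?p (sig x)) = Kb (sig x) / v (sig x) ^ N" using Kb(2) that by blast
      have d: "\<delta> (?p (sig x)) = Kd (sig x) / v (sig x) ^ N" using Kd(2) that by blast
      show ?thesis unfolding P_def q_def a b d using that by (simp add: field_simps)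
    qed
    finally show ?thesis .
  qed
  have gq: "gen (\<lambda>x. v (sig x) \<noteq> 0 \<and> Ka (sig x) \<noteq> 0)"
    using pull[OF m2] by (rule gen_mono) (use good2 in blast)
  have rep: "isrep G P q" unfolding isrep_def
  proof
    fix c assume c: "c \<in> C"
    show "ratrep C (\<lambda>y. c (G y)) (P c) q"
    proof (rule ratrep_intro)
      show "polyfun C (P c)" unfolding P_def using c
        by (intro pf_diff pf_mult pf_sig Kd(1) Kb(1) pf_const pf_coord)
      show "polyfun C q" unfolding q_def by (rule pf_sig[OF Ka(1)])
      show "gen (\<lambda>x. q x \<noteq> 0 \<and> c (G x) = P c x / q x)"
        using gq by (rule gen_mono) (use Gval[OF c] in \<open>auto simp: q_def\<close>)
    qed
  qed
  have valG: "reg G x \<and> val G x = G x" if "v (sig x) \<noteq> 0" "Ka (sig x) \<noteq> 0" for x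
  proof -
    have q: "q x \<noteq> 0" using that by (simp add: q_def)
    show ?thesis using isrep_val[OF rep q] Gval[OF _ that] by (auto intro: sep)
  qed
  have "gen (\<lambda>x. reg F x \<and> reg G (val F x) \<and> val G (val F x) = x)"
  proof (rule gen_mono[OF pull[OF m1]])
    fix x assume H: "\<delta> (sig x) \<noteq> 0 \<and> \<alpha> (sig x) \<noteq> 0 \<and> v (phi \<alpha> \<beta> \<delta> (sig x)) \<noteq> 0 \<and> ?p (phi \<alpha> \<beta> \<delta> (sig x)) = sig x"
    define y where "y = sig x"
    define z where "z = val F x"
    have regF: "reg F x" and z: "z = aff (\<alpha> y / \<delta> y) (\<beta> y / \<delta> y) x" using st H by (auto simp: z_def y_def)
    have sz: "sig z = phi \<alpha> \<beta> \<delta> y" unfolding z using sig_aff_phi H y_def by blast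
    have vz: "v (sig z) \<noteq> 0" using H sz y_def by simp
    have pz: "?p (sig z) = y" using H sz y_def by simp
    have Kz: "Ka (sig z) \<noteq> 0" using Ka(2) vz pz H y_def by (auto simp: field_simps)
    have "G z = x"
    proof (rule sep)
      fix c assume c: "c \<in> C"
      have "c (G z) = \<delta> y / \<alpha> y * c z + - \<beta> y / \<alpha> y * e c"
        unfolding G_def using aff_c[OF c] pz by simp
      also have "c z = \<alpha> y / \<delta> y * c x + \<beta> y / \<delta> y * e c" unfolding z using aff_c[OF c] by simp
      finally show "c (G z) = c x" using H y_def by (simp add: field_simps)
    qed
    then show "reg F x \<and> reg G (val F x) \<and> val G (val F x) = x"
      using regF valG[OF vz Kz] by (simp add: z_def)
  qed
  moreover have "gen (\<lambda>x. reg G x \<and> reg F (val G x) \<and> val F (val G x) = x)"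
  proof (rule gen_mono[OF pull[OF m2]])
    fix x assume H: "v (sig x) \<noteq> 0 \<and> \<delta> (?p (sig x)) \<noteq> 0 \<and> \<alpha> (?p (sig x)) \<noteq> 0 \<and> phi \<alpha> \<beta> \<delta> (?p (sig x)) = sig x"
    define w where "w = sig x"
    define a' where "a' = \<alpha> (?p w)"
    define b' where "b' = \<beta> (?p w)"
    define d' where "d' = \<delta> (?p w)"
    have nz: "a' \<noteq> 0" "d' \<noteq> 0" using H by (auto simp: a'_def d'_def w_def)
    have KK: "v (sig x) \<noteq> 0" "Ka (sig x) \<noteq> 0" using good2 H by auto
    have rG: "reg G x" and vG: "val G x = G x" using valG[OF KK] by auto
    have Gx: "G x = aff (d' / a') (- b' / a') x" unfolding G_def a'_def b'_def d'_def w_def ..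
    have ph: "phi \<alpha> \<beta> \<delta> (?p w) = w" using H w_def by simp
    have e1: "(a' * ?p w $ 1 + 2 * b') / d' = w $ 1"
      using ph unfolding phi_def vec2_eq a'_def b'_def d'_def by simp
    have e2: "(a' ^ 2 * ?p w $ 2 + a' * b' * ?p w $ 1 + b' ^ 2) / d' ^ 2 = w $ 2"
      using ph unfolding phi_def vec2_eq a'_def b'_def d'_def by simp
    define P1 where "P1 = ?p w $ 1"
    define P2 where "P2 = ?p w $ 2"
    have e1': "a' * P1 = d' * w $ 1 - 2 * b'" using e1 nz unfolding P1_def by (simp add: field_simps)
    have e2': "a'^2 * P2 = d'^2 * w $ 2 - a' * b' * P1 - b'^2" using e2 nz unfolding P1_def P2_def
      by (simp add: field_simps)
    have e3: "a' * b' * P1 = b' * (d' * w $ 1 - 2 * b')" using e1' by (metis mult.assoc mult.commute)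
    have e4a: "a'^2 * P2 = d'^2 * w $ 2 - b' * (d' * w $ 1 - 2 * b') - b'^2" using e2' e3 by simp
    have key: "\<And>(d::complex) b w1 w2. d^2*w2 - b*(d*w1 - 2*b) - b^2 = d^2*w2 - d*b*w1 + b^2" by (simp add: algebra_simps power2_eq_square)
    have e4: "a'^2 * P2 = d'^2 * w $ 2 - d' * b' * w $ 1 + b'^2" unfolding e4a key ..
    have p1: "P1 = (d' * w $ 1 - 2 * b') / a'" using e1' nz by (simp add: field_simps)
    have p2: "P2 = (d'^2 * w $ 2 - d' * b' * w $ 1 + b'^2) / a'^2" using e4 nz by (simp add: field_simps)
    have sG: "sig (G x) = ?p w"
      unfolding Gx sig_aff vec2_eq P1_def[symmetric] P2_def[symmetric] p1 p2 w_def[symmetric] using nz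
      by (simp add: field_simps power2_eq_square)
    have dG: "\<delta> (sig (G x)) \<noteq> 0" using sG nz d'_def by simp
    have "val F (G x) = x"
    proof -
      have st2: "val F (G x) = aff (\<alpha> (sig (G x)) / \<delta> (sig (G x))) (\<beta> (sig (G x)) / \<delta> (sig (G x))) (G x)"
        using st dG by blast
      show ?thesis
      proof (rule sep)
        fix c assume c: "c \<in> C"
        have "c (val F (G x)) = a' / d' * c (G x) + b' / d' * e c"
          using st2 aff_c[OF c] sG by (simp add: a'_def b'_def d'_def)
        also have "c (G x) = d' / a' * c x + - b' / a' * e c" unfolding Gx aff_c[OF c] ..
        finally show "c (val F (G x)) = c x" using nz by (simp add: field_simps)
      qed
    qed
    then show "reg G x \<and> reg F (val G x) \<and> val F (val G x) = x"
      using rG vG st dG by simp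
  qed
  moreover have "ratmap G" using isrep_ratmap[OF rep] .
  ultimately show ?thesis unfolding bir_def using F by blast
qed

end


definition T1 :: "(complex^2 \<Rightarrow> complex) \<Rightarrow> (complex^2 \<Rightarrow> complex) \<Rightarrow> complex^2 \<Rightarrow> complex" where
  "T1 \<alpha> \<beta> y = \<alpha> y * y$1 + 2 * \<beta> y"
definition T2 :: "(complex^2 \<Rightarrow> complex) \<Rightarrow> (complex^2 \<Rightarrow> complex) \<Rightarrow> complex^2 \<Rightarrow> complex" where
  "T2 \<alpha> \<beta> y = \<alpha> y ^ 2 * y$2 + \<alpha> y * \<beta> y * y$1 + \<beta> y ^ 2"

lemma phi_comp: "phi \<alpha> \<beta> \<delta> y $ 1 = T1 \<alpha> \<beta> y / \<delta> y" "phi \<alpha> \<beta> \<delta> y $ 2 = T2 \<alpha> \<beta> y / \<delta> y ^ 2"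
  unfolding phi_def T1_def T2_def by simp_all

lemma pf_T: "polyfun vcoords \<alpha> \<Longrightarrow> polyfun vcoords \<beta> \<Longrightarrow> polyfun vcoords (T1 \<alpha> \<beta>)"
  "polyfun vcoords \<alpha> \<Longrightarrow> polyfun vcoords \<beta> \<Longrightarrow> polyfun vcoords (T2 \<alpha> \<beta>)"
  unfolding T1_def T2_def by (intro pf_add pf_mult pf_pow pf_const pfv; assumption)+

lemma phi_clear_N:
  assumes "polyfun vcoords \<alpha>" "polyfun vcoords \<beta>" "polyfun vcoords \<delta>" "polyfun vcoords k"
  shows "\<exists>n0. \<forall>N\<ge>n0. \<exists>K. polyfun vcoords K \<and> (\<forall>y. \<delta> y \<noteq> 0 \<longrightarrow> k (phi \<alpha> \<beta> \<delta> y) = K y / (\<delta> y ^ 2) ^ N)"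
proof -
  have q: "polyfun vcoords (\<lambda>y. \<delta> y ^ 2)" using assms(3) by (rule pf_pow)
  have "\<exists>K n. polyfun vcoords K \<and> (\<forall>y. \<delta> y ^ 2 \<noteq> 0 \<longrightarrow> k (phi \<alpha> \<beta> \<delta> y) = K y / (\<delta> y ^ 2) ^ n)"
  proof (rule pf_clear[OF assms(4) _ q])
    fix c :: "complex^2 \<Rightarrow> complex" assume "c \<in> vcoords"
    then obtain i where c: "c = (\<lambda>x. x $ i)" by (auto simp: vcoords_iff)
    show "\<exists>P. polyfun vcoords P \<and> (\<forall>x. \<delta> x ^ 2 \<noteq> 0 \<longrightarrow> c (phi \<alpha> \<beta> \<delta> x) = P x / \<delta> x ^ 2)"
    proof (cases "i = 1")
      case True
      show ?thesis using assms pf_T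
        by (intro exI[of _ "\<lambda>y. T1 \<alpha> \<beta> y * \<delta> y"]) (auto intro: pf_mult simp: c True phi_comp power2_eq_square)
    next
      case False
      then have "i = 2" using exhaust_2 by blast
      then show ?thesis using assms pf_T
        by (intro exI[of _ "T2 \<alpha> \<beta>"]) (auto simp: c phi_comp)
    qed
  qed
  then obtain K n where K: "polyfun vcoords K" "\<forall>y. \<delta> y ^ 2 \<noteq> 0 \<longrightarrow> k (phi \<alpha> \<beta> \<delta> y) = K y / (\<delta> y ^ 2) ^ n"
    by blast
  show ?thesis
  proof (rule exI[of _ n], intro allI impI)
    fix N assume "n \<le> N"
    from clear_raise[OF K(1) q K(2) this] show "\<exists>K. polyfun vcoords K \<and> (\<forall>y. \<delta> y \<noteq> 0 \<longrightarrow> k (phi \<alpha> \<beta> \<delta> y) = K y / (\<delta> y ^ 2) ^ N)"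
      by auto
  qed
qed

context sigspace begin

lemma down:
  assumes "polyfun vcoords Z" "polyfun vcoords E1" "polyfun vcoords E2"
    and "gen (\<lambda>x. Z (sig x) \<noteq> 0 \<and> E1 (sig x) = 0 \<and> E2 (sig x) = 0)"
    and "\<And>w. Z w \<noteq> 0 \<Longrightarrow> E1 w = 0 \<Longrightarrow> E2 w = 0 \<Longrightarrow> Q w"
  shows "V.gen Q"
proof -
  have "gen (\<lambda>x. E1 (sig x) = 0)" "gen (\<lambda>x. E2 (sig x) = 0)" using assms(4) by (auto elim: gen_mono)
  then have E: "E1 w = 0" "E2 w = 0" for w using transfer0 assms(2,3) by blast+
  obtain x0 where "Z (sig x0) \<noteq> 0" using gen_ex[OF assms(4)] by blast
  from V.gen_poly[OF assms(1) this] show ?thesis by (rule V.gen_mono) (use assms(5) E in blast)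
qed

theorem K_mid:
  assumes F: "ratmap F" and G: "ratmap G"
    and pf: "polyfun vcoords \<alpha>" "polyfun vcoords \<beta>" "polyfun vcoords \<delta>" and dnz: "\<delta> y0 \<noteq> 0"
    and st: "\<And>x. \<delta> (sig x) \<noteq> 0 \<Longrightarrow> reg F x \<and> val F x = aff (\<alpha> (sig x) / \<delta> (sig x)) (\<beta> (sig x) / \<delta> (sig x)) x"
    and h1: "gen (\<lambda>x. reg F x \<and> reg G (val F x) \<and> val G (val F x) = x)"
    and h2: "gen (\<lambda>x. reg G x \<and> reg F (val G x) \<and> val F (val G x) = x)"
    and u: "polyfun vcoords u1" "polyfun vcoords u2" "polyfun vcoords v"
    and K: "gen (\<lambda>x. v (sig x) \<noteq> 0 \<and> sig (val G x) = psi u1 u2 v (sig x))"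
  shows "MID \<alpha> \<beta> \<delta>"
proof -
  let ?p = "psi u1 u2 v"
  let ?ph = "phi \<alpha> \<beta> \<delta>"
  have inv1: "gen (\<lambda>x. val G (val F x) = x)" using h1 by (rule gen_mono) auto
  have inv2: "gen (\<lambda>x. val F (val G x) = x)" using h2 by (rule gen_mono) auto
  have domF: "gen (\<lambda>x. k (val F x) \<noteq> 0)" if "polyfun C k" "k z \<noteq> 0" for k z
    using dominant[OF F inv1 that] .
  have domG: "gen (\<lambda>x. k (val G x) \<noteq> 0)" if "polyfun C k" "k z \<noteq> 0" for k z
    using dominant[OF G inv2 that] .
  obtain z0 where z0: "sig z0 = y0" using sig_surj by blast
  have pfd: "polyfun C (\<lambda>x. \<delta> (sig x))" by (rule pf_sig[OF pf(3)])
  obtain n0 where n0: "ns n0 \<noteq> 0" using ns_nz by blast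
  define S2 where "S2 = (\<lambda>x. (v (sig x) \<noteq> 0 \<and> sig (val G x) = ?p (sig x)) \<and>
      (reg G x \<and> reg F (val G x) \<and> val F (val G x) = x) \<and> \<delta> (sig (val G x)) \<noteq> 0 \<and> ns x \<noteq> 0)"
  have dz0: "\<delta> (sig z0) \<noteq> 0" using z0 dnz by simp
  have gS2: "gen S2" unfolding S2_def
    using gen_conj[OF K gen_conj[OF h2 gen_conj[OF domG[OF pfd dz0] gen_poly[OF ns_pf n0]]]] .
  have P2: "v w \<noteq> 0 \<and> \<delta> (?p w) \<noteq> 0 \<and> \<alpha> (?p w) \<noteq> 0 \<and> ?ph (?p w) = w" if "S2 x" "w = sig x" for x w
  proof -
    define Gx where "Gx = val G x"
    have H: "v w \<noteq> 0" "sig Gx = ?p w" "val F Gx = x" "\<delta> (sig Gx) \<noteq> 0" "ns x \<noteq> 0"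
      using that unfolding S2_def Gx_def by auto
    have FG: "val F Gx = aff (\<alpha> (sig Gx) / \<delta> (sig Gx)) (\<beta> (sig Gx) / \<delta> (sig Gx)) Gx"
      using st H(4) by blast
    have "ns x = \<alpha> (sig Gx) / \<delta> (sig Gx) * ns Gx" using FG H(3) ns_aff by metis
    then have "\<alpha> (sig Gx) \<noteq> 0" using H(5) by auto
    moreover have "?ph (sig Gx) = w" using sig_aff_phi[where \<delta>=\<delta> and y="sig Gx" and x=Gx and \<alpha>=\<alpha> and \<beta>=\<beta>] H(4) FG H(3) that(2) by simp
    ultimately show ?thesis using H by simp
  qed
  obtain na where na: "\<forall>N\<ge>na. \<exists>K. polyfun vcoords K \<and> (\<forall>w. v w \<noteq> 0 \<longrightarrow> \<alpha> (?p w) = K w / v w ^ N)"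
    using psi_clear_N[OF u pf(1)] by blast
  obtain nd where nd: "\<forall>N\<ge>nd. \<exists>K. polyfun vcoords K \<and> (\<forall>w. v w \<noteq> 0 \<longrightarrow> \<delta> (?p w) = K w / v w ^ N)"
    using psi_clear_N[OF u pf(3)] by blast
  obtain n1 where n1: "\<forall>N\<ge>n1. \<exists>K. polyfun vcoords K \<and> (\<forall>w. v w \<noteq> 0 \<longrightarrow> T1 \<alpha> \<beta> (?p w) = K w / v w ^ N)"
    using psi_clear_N[OF u pf_T(1)[OF pf(1,2)]] by blast
  obtain n2 where n2: "\<forall>N\<ge>n2. \<exists>K. polyfun vcoords K \<and> (\<forall>w. v w \<noteq> 0 \<longrightarrow> T2 \<alpha> \<beta> (?p w) = K w / v w ^ N)"
    using psi_clear_N[OF u pf_T(2)[OF pf(1,2)]] by blast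
  define N where "N = na + nd + n1 + n2"
  have Nle: "na \<le> N" "nd \<le> N" "n1 \<le> N" "n2 \<le> 2 * N" unfolding N_def by auto
  obtain Ka where Ka: "polyfun vcoords Ka" "\<forall>w. v w \<noteq> 0 \<longrightarrow> \<alpha> (?p w) = Ka w / v w ^ N"
    using na Nle by blast
  obtain Kd where Kd: "polyfun vcoords Kd" "\<forall>w. v w \<noteq> 0 \<longrightarrow> \<delta> (?p w) = Kd w / v w ^ N"
    using nd Nle by blast
  obtain K1 where K1: "polyfun vcoords K1" "\<forall>w. v w \<noteq> 0 \<longrightarrow> T1 \<alpha> \<beta> (?p w) = K1 w / v w ^ N"
    using n1 Nle by blast
  obtain K2 where K2: "polyfun vcoords K2" "\<forall>w. v w \<noteq> 0 \<longrightarrow> T2 \<alpha> \<beta> (?p w) = K2 w / v w ^ (2 * N)"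
    using n2 Nle by blast
  have m2: "V.gen (\<lambda>w. v w \<noteq> 0 \<and> \<delta> (?p w) \<noteq> 0 \<and> \<alpha> (?p w) \<noteq> 0 \<and> ?ph (?p w) = w)"
  proof (rule down[of "\<lambda>w. v w * Kd w * Ka w" "\<lambda>w. K1 w - w$1 * Kd w" "\<lambda>w. K2 w - w$2 * Kd w ^ 2"])
    show "polyfun vcoords (\<lambda>w. v w * Kd w * Ka w)" "polyfun vcoords (\<lambda>w. K1 w - w$1 * Kd w)"
      "polyfun vcoords (\<lambda>w. K2 w - w$2 * Kd w ^ 2)"
      by (intro pf_mult pf_diff pf_pow pfv u(3) Kd(1) Ka(1) K1(1) K2(1))+
  next
    show "gen (\<lambda>x. v (sig x) * Kd (sig x) * Ka (sig x) \<noteq> 0 \<and> K1 (sig x) - sig x $ 1 * Kd (sig x) = 0 \<and>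
                    K2 (sig x) - sig x $ 2 * Kd (sig x) ^ 2 = 0)"
    proof (rule gen_mono[OF gS2])
      fix x assume "S2 x"
      define w where "w = sig x"
      from P2[OF \<open>S2 x\<close> w_def] have H: "v w \<noteq> 0" "\<delta> (?p w) \<noteq> 0" "\<alpha> (?p w) \<noteq> 0" "?ph (?p w) = w" by auto
      have a: "\<alpha> (?p w) = Ka w / v w ^ N" and d: "\<delta> (?p w) = Kd w / v w ^ N"
        and t1: "T1 \<alpha> \<beta> (?p w) = K1 w / v w ^ N" and t2: "T2 \<alpha> \<beta> (?p w) = K2 w / v w ^ (2 * N)"
        using H(1) Ka(2) Kd(2) K1(2) K2(2) by auto
      have e1: "T1 \<alpha> \<beta> (?p w) = w $ 1 * \<delta> (?p w)" using H(2,4) phi_comp(1)[of \<alpha> \<beta> \<delta> "?p w"]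
        by (simp add: field_simps)
      have e2: "T2 \<alpha> \<beta> (?p w) = w $ 2 * \<delta> (?p w) ^ 2" using H(2,4) phi_comp(2)[of \<alpha> \<beta> \<delta> "?p w"]
        by (simp add: field_simps)
      have "Kd w \<noteq> 0" "Ka w \<noteq> 0" using H(1,2,3) a d by auto
      moreover have "K1 w - w $ 1 * Kd w = 0" using e1 H(1) unfolding t1 d by (simp add: field_simps)
      moreover have "K2 w - w $ 2 * Kd w ^ 2 = 0"
      proof -
        have pw: "v w ^ (2 * N) = (v w ^ N) ^ 2" by (metis mult.commute power_mult)
        show ?thesis using e2 H(1) unfolding t2 d pw by (simp add: field_simps)
      qed
      ultimately show "v (sig x) * Kd (sig x) * Ka (sig x) \<noteq> 0 \<and> K1 (sig x) - sig x $ 1 * Kd (sig x) = 0 \<and>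
                    K2 (sig x) - sig x $ 2 * Kd (sig x) ^ 2 = 0" using H(1) by (simp add: w_def)
    qed
  next
    fix w assume Z: "v w * Kd w * Ka w \<noteq> 0" and E: "K1 w - w $ 1 * Kd w = 0" "K2 w - w $ 2 * Kd w ^ 2 = 0"
    have v: "v w \<noteq> 0" using Z by auto
    have a: "\<alpha> (?p w) = Ka w / v w ^ N" and d: "\<delta> (?p w) = Kd w / v w ^ N"
      and t1: "T1 \<alpha> \<beta> (?p w) = K1 w / v w ^ N" and t2: "T2 \<alpha> \<beta> (?p w) = K2 w / v w ^ (2 * N)"
      using v Ka(2) Kd(2) K1(2) K2(2) by auto
    have "?ph (?p w) $ 1 = w $ 1" using E(1) Z unfolding phi_comp t1 d by (simp add: field_simps)
    moreover have "?ph (?p w) $ 2 = w $ 2"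
    proof -
      have pw: "v w ^ (2 * N) = (v w ^ N) ^ 2" by (metis mult.commute power_mult)
      show ?thesis using E(2) Z unfolding phi_comp t2 d pw by (simp add: field_simps)
    qed
    ultimately show "v w \<noteq> 0 \<and> \<delta> (?p w) \<noteq> 0 \<and> \<alpha> (?p w) \<noteq> 0 \<and> ?ph (?p w) = w"
      using Z unfolding a d vec2_eq by auto
  qed
  obtain hK a0 where hK: "polyfun C hK" "hK a0 \<noteq> 0" "\<forall>x. hK x \<noteq> 0 \<longrightarrow> v (sig x) \<noteq> 0 \<and> sig (val G x) = ?p (sig x)"
    using K unfolding gen_def by blast
  define S1 where "S1 = (\<lambda>x. \<delta> (sig x) \<noteq> 0 \<and> (reg F x \<and> reg G (val F x) \<and> val G (val F x) = x) \<and>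
      ns (val F x) \<noteq> 0 \<and> hK (val F x) \<noteq> 0)"
  have gS1: "gen S1" unfolding S1_def
    using gen_conj[OF gen_poly[OF pfd dz0] gen_conj[OF h1 gen_conj[OF domF[OF ns_pf n0] domF[OF hK(1,2)]]]] .
  have P1: "\<delta> y \<noteq> 0 \<and> \<alpha> y \<noteq> 0 \<and> v (?ph y) \<noteq> 0 \<and> ?p (?ph y) = y" if "S1 x" "y = sig x" for x y
  proof -
    define z where "z = val F x"
    have H: "\<delta> y \<noteq> 0" "val G z = x" "ns z \<noteq> 0" "hK z \<noteq> 0" using that unfolding S1_def z_def by auto
    have z: "z = aff (\<alpha> y / \<delta> y) (\<beta> y / \<delta> y) x"
      using st[of x] H(1) unfolding z_def that(2) by blast
    have sz: "sig z = ?ph y" unfolding z by (rule sig_aff_phi) (use H(1) that(2) in auto)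
    have "ns z = \<alpha> y / \<delta> y * ns x" unfolding z ns_aff ..
    then have "\<alpha> y \<noteq> 0" using H(3) by auto
    moreover have "v (sig z) \<noteq> 0" "sig (val G z) = ?p (sig z)" using hK(3) H(4) by auto
    ultimately show ?thesis using H sz that(2) by simp
  qed
  obtain k1 where k1: "\<forall>N\<ge>k1. \<exists>K. polyfun vcoords K \<and> (\<forall>y. \<delta> y \<noteq> 0 \<longrightarrow> u1 (?ph y) = K y / (\<delta> y ^ 2) ^ N)"
    using phi_clear_N[OF pf u(1)] by blast
  obtain k2 where k2: "\<forall>N\<ge>k2. \<exists>K. polyfun vcoords K \<and> (\<forall>y. \<delta> y \<noteq> 0 \<longrightarrow> u2 (?ph y) = K y / (\<delta> y ^ 2) ^ N)"
    using phi_clear_N[OF pf u(2)] by blast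
  obtain k3 where k3: "\<forall>N\<ge>k3. \<exists>K. polyfun vcoords K \<and> (\<forall>y. \<delta> y \<noteq> 0 \<longrightarrow> v (?ph y) = K y / (\<delta> y ^ 2) ^ N)"
    using phi_clear_N[OF pf u(3)] by blast
  define M where "M = k1 + k2 + k3"
  have Mle: "k1 \<le> M" "k2 \<le> M" "k3 \<le> M" unfolding M_def by auto
  obtain U1 where U1: "polyfun vcoords U1" "\<forall>y. \<delta> y \<noteq> 0 \<longrightarrow> u1 (?ph y) = U1 y / (\<delta> y ^ 2) ^ M"
    using k1 Mle by blast
  obtain U2 where U2: "polyfun vcoords U2" "\<forall>y. \<delta> y \<noteq> 0 \<longrightarrow> u2 (?ph y) = U2 y / (\<delta> y ^ 2) ^ M"
    using k2 Mle by blast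
  obtain V where V: "polyfun vcoords V" "\<forall>y. \<delta> y \<noteq> 0 \<longrightarrow> v (?ph y) = V y / (\<delta> y ^ 2) ^ M"
    using k3 Mle by blast
  have m1: "V.gen (\<lambda>y. \<delta> y \<noteq> 0 \<and> \<alpha> y \<noteq> 0 \<and> v (?ph y) \<noteq> 0 \<and> ?p (?ph y) = y)"
  proof (rule down[of "\<lambda>y. \<delta> y * \<alpha> y * V y" "\<lambda>y. U1 y - y$1 * V y" "\<lambda>y. U2 y - y$2 * V y"])
    show "polyfun vcoords (\<lambda>y. \<delta> y * \<alpha> y * V y)" "polyfun vcoords (\<lambda>y. U1 y - y$1 * V y)"
      "polyfun vcoords (\<lambda>y. U2 y - y$2 * V y)"
      by (intro pf_mult pf_diff pfv pf(1) pf(3) V(1) U1(1) U2(1))+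
  next
    show "gen (\<lambda>x. \<delta> (sig x) * \<alpha> (sig x) * V (sig x) \<noteq> 0 \<and> U1 (sig x) - sig x $ 1 * V (sig x) = 0 \<and>
                    U2 (sig x) - sig x $ 2 * V (sig x) = 0)"
    proof (rule gen_mono[OF gS1])
      fix x assume "S1 x"
      define y where "y = sig x"
      from P1[OF \<open>S1 x\<close> y_def] have H: "\<delta> y \<noteq> 0" "\<alpha> y \<noteq> 0" "v (?ph y) \<noteq> 0" "?p (?ph y) = y" by auto
      have a: "u1 (?ph y) = U1 y / (\<delta> y ^ 2) ^ M" "u2 (?ph y) = U2 y / (\<delta> y ^ 2) ^ M"
        "v (?ph y) = V y / (\<delta> y ^ 2) ^ M"
        using H(1) U1(2) U2(2) V(2) by auto
      have Vn: "V y \<noteq> 0" using H(1,3) a(3) by auto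
      have "u1 (?ph y) / v (?ph y) = y $ 1" "u2 (?ph y) / v (?ph y) = y $ 2"
        using H(4) unfolding psi_def vec2_eq by auto
      then have "U1 y - y $ 1 * V y = 0" "U2 y - y $ 2 * V y = 0"
        unfolding a using H(1) Vn by (simp_all add: field_simps)
      then show "\<delta> (sig x) * \<alpha> (sig x) * V (sig x) \<noteq> 0 \<and> U1 (sig x) - sig x $ 1 * V (sig x) = 0 \<and>
                    U2 (sig x) - sig x $ 2 * V (sig x) = 0" using H(1,2) Vn by (simp add: y_def)
    qed
  next
    fix y assume Z: "\<delta> y * \<alpha> y * V y \<noteq> 0" and E: "U1 y - y$1 * V y = 0" "U2 y - y$2 * V y = 0"
    have d: "\<delta> y \<noteq> 0" using Z by auto
    have a: "u1 (?ph y) = U1 y / (\<delta> y ^ 2) ^ M" "u2 (?ph y) = U2 y / (\<delta> y ^ 2) ^ M"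
      "v (?ph y) = V y / (\<delta> y ^ 2) ^ M"
      using d U1(2) U2(2) V(2) by auto
    have "?p (?ph y) = y" unfolding psi_def vec2_eq a using E Z by (simp add: field_simps)
    then show "\<delta> y \<noteq> 0 \<and> \<alpha> y \<noteq> 0 \<and> v (?ph y) \<noteq> 0 \<and> ?p (?ph y) = y" using Z a(3) by auto
  qed
  show ?thesis unfolding MID_def using u m1 m2 by blast
qed

end


lemma two_ne_one [simp]: "(2::2) \<noteq> 1" "(1::2) \<noteq> 2"
  by (simp_all add: eq_commute)

lemma mat_eq2: "(A::'a^2^2) = B \<longleftrightarrow> A$1$1 = B$1$1 \<and> A$1$2 = B$1$2 \<and> A$2$1 = B$2$1 \<and> A$2$2 = B$2$2"
  by (auto simp: vec_eq_iff forall_2)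

lemma mmult2: "((A::'a::semiring_1^2^2) ** B) $ i $ j = A$i$1 * B$1$j + A$i$2 * B$2$j"
  by (simp add: matrix_matrix_mult_def sum_2)

definition sigM :: "complex^2^2 \<Rightarrow> complex^2" where
  "sigM M = vector [M$1$1 + M$2$2, M$1$1 * M$2$2 - M$1$2 * M$2$1]"
definition affM :: "complex \<Rightarrow> complex \<Rightarrow> complex^2^2 \<Rightarrow> complex^2^2" where
  "affM a b M = (\<chi> i j. a * M$i$j + (if i = j then b else 0))"
definition eM :: "(complex^2^2 \<Rightarrow> complex) \<Rightarrow> complex" where
  "eM c = c (mat 1)"
definition nsM :: "complex^2^2 \<Rightarrow> complex" where
  "nsM M = M$2$1"

definition sigX :: "complex^2 \<Rightarrow> complex^2" where
  "sigX x = vector [x$1 + x$2, x$1 * x$2]"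
definition affX :: "complex \<Rightarrow> complex \<Rightarrow> complex^2 \<Rightarrow> complex^2" where
  "affX a b x = (\<chi> i. a * x$i + b)"
definition nsX :: "complex^2 \<Rightarrow> complex" where
  "nsX x = x$1 - x$2"

definition mat2 :: "complex \<Rightarrow> complex \<Rightarrow> complex \<Rightarrow> complex \<Rightarrow> complex^2^2" where
  "mat2 a b c d = (\<chi> i j. if i = 1 then (if j = 1 then a else b) else (if j = 1 then c else d))"

lemma mat2_nth [simp]: "mat2 a b c d $ 1 $ 1 = a" "mat2 a b c d $ 1 $ 2 = b"
  "mat2 a b c d $ 2 $ 1 = c" "mat2 a b c d $ 2 $ 2 = d"
  by (simp_all add: mat2_def)

lemma sigM_nth [simp]: "sigM M $ 1 = M$1$1 + M$2$2" "sigM M $ 2 = M$1$1 * M$2$2 - M$1$2 * M$2$1"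
  by (simp_all add: sigM_def)
lemma sigX_nth [simp]: "sigX x $ 1 = x$1 + x$2" "sigX x $ 2 = x$1 * x$2"
  by (simp_all add: sigX_def)
lemma affM_nth [simp]: "affM a b M $ i $ j = a * M$i$j + (if i = j then b else 0)"
  by (simp add: affM_def)
lemma affX_nth [simp]: "affX a b x $ i = a * x$i + b"
  by (simp add: affX_def)

interpretation MS: sigspace mcoords val_m sigM affM eM nsM
proof unfold_locales
  fix i :: 2
  show "polyfun mcoords (\<lambda>x. sigM x $ i)"
  proof (cases "i = 1")
    case True
    then show ?thesis by (simp add: pf_add pfm)
  next
    case False
    then have "i = 2" using exhaust_2 by blast
    then show ?thesis by (simp add: pf_diff pf_mult pfm)
  qed
next
  fix y :: "complex^2"
  show "\<exists>x. sigM x = y" by (rule exI[of _ "mat2 0 (- y$2) 1 (y$1)"]) (simp add: vec2_eq)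
next
  fix c :: "complex^2^2 \<Rightarrow> complex" and a b x assume "c \<in> mcoords"
  then obtain i j where c: "c = (\<lambda>M. M $ i $ j)" by (auto simp: mcoords_iff)
  show "c (affM a b x) = a * c x + b * eM c" by (simp add: c eM_def mat_def)
next
  fix a b x
  show "sigM (affM a b x) = vector [a * sigM x $ 1 + 2 * b, a\<^sup>2 * sigM x $ 2 + a * b * sigM x $ 1 + b\<^sup>2]"
    by (simp add: vec2_eq algebra_simps power2_eq_square)
next
  show "polyfun mcoords nsM" unfolding nsM_def by (rule pfm)
  show "\<exists>x. nsM x \<noteq> 0" by (rule exI[of _ "mat2 0 0 1 0"]) (simp add: nsM_def)
  fix a b x show "nsM (affM a b x) = a * nsM x" by (simp add: nsM_def)
qed

lemma csqrt_sq: "csqrt z * csqrt z = z"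
  using power2_csqrt[of z] by (simp add: power2_eq_square)

interpretation XS: sigspace vcoords val_v sigX affX "\<lambda>c. 1" nsX
proof unfold_locales
  fix i :: 2
  show "polyfun vcoords (\<lambda>x. sigX x $ i)"
  proof (cases "i = 1")
    case True
    then show ?thesis by (simp add: pf_add pfv)
  next
    case False
    then have "i = 2" using exhaust_2 by blast
    then show ?thesis by (simp add: pf_mult pfv)
  qed
next
  fix y :: "complex^2"
  define s where "s = csqrt (y$1 ^ 2 - 4 * y$2)"
  have s: "s * s = y$1 ^ 2 - 4 * y$2" unfolding s_def by (rule csqrt_sq)
  show "\<exists>x. sigX x = y"
  proof (rule exI[of _ "vector [(y$1 + s)/2, (y$1 - s)/2]"])
    have "(y$1 + s) / 2 * ((y$1 - s) / 2) = (y$1 * y$1 - s * s) / 4" by (simp add: field_simps)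
    also have "\<dots> = y$2" unfolding s by (simp add: power2_eq_square)
    finally show "sigX (vector [(y$1 + s)/2, (y$1 - s)/2]) = y" by (simp add: vec2_eq field_simps)
  qed
next
  fix c :: "complex^2 \<Rightarrow> complex" and a b x assume "c \<in> vcoords"
  then obtain i where c: "c = (\<lambda>x. x $ i)" by (auto simp: vcoords_iff)
  show "c (affX a b x) = a * c x + b * 1" by (simp add: c)
next
  fix a b x
  show "sigX (affX a b x) = vector [a * sigX x $ 1 + 2 * b, a\<^sup>2 * sigX x $ 2 + a * b * sigX x $ 1 + b\<^sup>2]"
    by (simp add: vec2_eq algebra_simps power2_eq_square)
next
  show "polyfun vcoords nsX" unfolding nsX_def by (intro pf_diff pfv)
  show "\<exists>x. nsX x \<noteq> 0" by (rule exI[of _ "vector [1, 0]"]) (simp add: nsX_def)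
  fix a b x show "nsX (affX a b x) = a * nsX x" by (simp add: nsX_def algebra_simps)
qed

context space begin

lemma raw_val: "ratmap F \<Longrightarrow> gen (\<lambda>x. F x = val F x)"
proof -
  assume "ratmap F"
  then obtain P q where rep: "isrep F P q" using crep by blast
  have "gen (\<lambda>x. \<forall>c\<in>C. q x \<noteq> 0 \<and> c (F x) = P c x / q x)"
    using rep unfolding isrep_def by (intro gen_ball finC) (auto intro: gen_ratrep)
  then show ?thesis
  proof (rule gen_mono)
    fix x assume H: "\<forall>c\<in>C. q x \<noteq> 0 \<and> c (F x) = P c x / q x"
    obtain c0 where "c0 \<in> C" using neC by blast
    then have "q x \<noteq> 0" using H by blast
    show "F x = val F x" by (rule sep) (use H isrep_val(2)[OF rep \<open>q x \<noteq> 0\<close>] in auto)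
  qed
qed

end


lemma minv:
  fixes A :: "complex^2^2"
  assumes "invertible A" shows "A ** matrix_inv A = mat 1" "matrix_inv A ** A = mat 1"
proof -
  have "\<exists>A'. A ** A' = mat 1 \<and> A' ** A = mat 1" using assms unfolding invertible_def by blast
  then have "A ** matrix_inv A = mat 1 \<and> matrix_inv A ** A = mat 1"
    unfolding matrix_inv_def by (rule someI_ex)
  then show "A ** matrix_inv A = mat 1" "matrix_inv A ** A = mat 1" by auto
qed

lemma conj_of_comm:
  fixes B R M :: "complex^2^2"
  assumes "invertible B" "B ** R = M ** B" shows "B ** R ** matrix_inv B = M"
proof -
  have "B ** R ** matrix_inv B = M ** (B ** matrix_inv B)" by (simp add: assms(2) matrix_mul_assoc)
  then show ?thesis using minv[OF assms(1)] by simp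
qed

lemma comm_of_conj:
  fixes B X Y :: "complex^2^2"
  assumes "invertible B" "B ** X ** matrix_inv B = Y" shows "B ** X = Y ** B"
proof -
  have "Y ** B = B ** X ** (matrix_inv B ** B)" by (simp add: assms(2)[symmetric] matrix_mul_assoc)
  then show ?thesis using minv[OF assms(1)] by simp
qed

lemma inv_det2: "(A::complex^2^2)$1$1 * A$2$2 - A$1$2 * A$2$1 \<noteq> 0 \<Longrightarrow> invertible A"
  by (simp add: invertible_det_nz det_2)

lemma affM_mult_left: "((B::complex^2^2) ** affM a b R) $ i $ j = a * (B ** R) $ i $ j + b * B $ i $ j"
  using exhaust_2[of j] by (auto simp: mmult2 algebra_simps)

lemma affM_mult_right: "(affM a b M ** (B::complex^2^2)) $ i $ j = a * (M ** B) $ i $ j + b * B $ i $ j"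
  using exhaust_2[of i] by (auto simp: mmult2 algebra_simps)

lemma aff_comm:
  fixes B R M :: "complex^2^2"
  assumes "B ** R = M ** B" shows "B ** affM a b R = affM a b M ** B"
  by (simp add: vec_eq_iff affM_mult_left affM_mult_right assms)

lemma comm_form:
  fixes R X :: "complex^2^2"
  assumes "affM 1 s R ** X = X ** affM 1 s R" "R$2$1 \<noteq> 0"
  shows "X = affM (X$2$1 / R$2$1) (X$1$1 - X$2$1 / R$2$1 * R$1$1) R"
proof -
  have e: "(affM 1 s R ** X) $ i $ j = (X ** affM 1 s R) $ i $ j" for i j using assms(1) by simp
  have e1: "R$1$2 * X$2$1 = X$1$2 * R$2$1" using e[of 1 1] by (simp add: mmult2 algebra_simps)
  have e2: "R$2$1 * X$1$1 + R$2$2 * X$2$1 = X$2$1 * R$1$1 + X$2$2 * R$2$1"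
    using e[of 2 1] by (simp add: mmult2 algebra_simps)
  show ?thesis unfolding mat_eq2 using assms(2) e1 e2 by (simp add: field_simps)
qed

definition Rsl :: "complex \<Rightarrow> complex \<Rightarrow> complex^2 \<Rightarrow> complex^2^2" where
  "Rsl u v y = mat2 u ((u * y$1 - u^2 - y$2) / v) v (y$1 - u)"

lemma Rsl_nth [simp]: "Rsl u v y $ 1 $ 1 = u" "Rsl u v y $ 1 $ 2 = (u * y$1 - u^2 - y$2) / v"
  "Rsl u v y $ 2 $ 1 = v" "Rsl u v y $ 2 $ 2 = y$1 - u"
  by (simp_all add: Rsl_def)

lemma sig_Rsl: "v \<noteq> 0 \<Longrightarrow> sigM (Rsl u v y) = y"
  by (simp add: vec2_eq field_simps power2_eq_square)

lemma Rsl_self: "M$2$1 \<noteq> 0 \<Longrightarrow> Rsl (M$1$1) (M$2$1) (sigM M) = M"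
  by (simp add: mat_eq2 field_simps power2_eq_square)

lemma pf_Rsl: "polyfun vcoords (\<lambda>y. Rsl u v y $ i $ j)"
proof -
  have "polyfun vcoords (\<lambda>y. (1/v) * (u * y$1 - u^2 - y$2))"
    by (intro pf_mult pf_diff pf_const pfv)
  then have 12: "polyfun vcoords (\<lambda>y. Rsl u v y $ 1 $ 2)" by (simp add: field_simps)
  have 22: "polyfun vcoords (\<lambda>y. Rsl u v y $ 2 $ 2)" by (simp add: pf_diff pfv pf_const)
  show ?thesis using exhaust_2[of i] exhaust_2[of j] 12 22 by (auto intro: pf_const)
qed

lemma pf_comp_Rsl: "polyfun mcoords k \<Longrightarrow> polyfun vcoords (\<lambda>y. k (Rsl u v y))"
  by (rule pf_comp) (auto simp: mcoords_iff pf_Rsl)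

lemma pf_comp_sigM: "polyfun vcoords k \<Longrightarrow> polyfun mcoords (\<lambda>M. k (sigM M))"
  by (rule MS.pf_sig)

lemma choose_s: "\<exists>s::complex. (R$1$1 + s) * (R$2$2 + s) - R$1$2 * R$2$1 \<noteq> 0"
proof (rule ccontr)
  assume "\<not> ?thesis"
  then have "(R$1$1 + s) * (R$2$2 + s) - R$1$2 * R$2$1 = 0" for s :: complex by blast
  from this[of 0] this[of 1] this[of "-1"] show False by (simp add: algebra_simps)
qed

theorem struct_Phi:
  assumes rat: "M.ratmap \<Phi>" and comp: "compatible_conj \<Phi>"
  shows "\<exists>\<alpha> \<beta> \<delta>. polyfun vcoords \<alpha> \<and> polyfun vcoords \<beta> \<and> polyfun vcoords \<delta> \<and> (\<exists>y. \<delta> y \<noteq> 0) \<and>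
     (\<forall>M. \<delta> (sigM M) \<noteq> 0 \<longrightarrow> M.reg \<Phi> M \<and>
        val_m \<Phi> M = affM (\<alpha> (sigM M) / \<delta> (sigM M)) (\<beta> (sigM M) / \<delta> (sigM M)) M)"
proof -
  have compat: "A ** val_m \<Phi> M ** matrix_inv A = val_m \<Phi> (A ** M ** matrix_inv A)"
    if "invertible A" "M.reg \<Phi> M" "M.reg \<Phi> (A ** M ** matrix_inv A)" for A M
    using comp that unfolding compatible_conj_def M_reg by blast
  obtain P q where rep: "M.isrep \<Phi> P q" using M.crep[OF rat] by blast
  have pfq: "polyfun mcoords q" using M.isrep_pf(1)[OF rep] .
  have pfP: "polyfun mcoords (P c)" if "c \<in> mcoords" for c using M.isrep_pf(2)[OF rep that] .
  have c11: "(\<lambda>M. M$1$1) \<in> mcoords" and c21: "(\<lambda>M. M$2$1) \<in> mcoords" by (auto simp: mcoords_iff)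
  have valq: "M.reg \<Phi> M \<and> val_m \<Phi> M $ i $ j = P (\<lambda>M. M$i$j) M / q M" if "q M \<noteq> 0" for M i j
    using M.isrep_val[OF rep that] by (auto simp: mcoords_iff)
  have "M.gen (\<lambda>M. q M \<noteq> 0 \<and> M$2$1 \<noteq> 0)"
    using M.gen_conj[OF M.isrep_gen[OF rep] M.gen_poly[OF pfm, of "mat2 0 0 1 0"]] by simp
  then obtain Ms where Ms: "q Ms \<noteq> 0" "Ms$2$1 \<noteq> 0" using M.gen_ex by blast
  define u0 where "u0 = Ms$1$1"
  define v0 where "v0 = Ms$2$1"
  have v0: "v0 \<noteq> 0" using Ms by (simp add: v0_def)
  define R where "R = Rsl u0 v0"
  have R21: "R y $ 2 $ 1 = v0" and R11: "R y $ 1 $ 1 = u0" for y by (simp_all add: R_def)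
  have sigR: "sigM (R y) = y" for y unfolding R_def using sig_Rsl[OF v0] .
  have RMs: "R (sigM Ms) = Ms" unfolding R_def u0_def v0_def using Rsl_self[OF Ms(2)] .
  define \<alpha> where "\<alpha> = (\<lambda>y. P (\<lambda>M. M$2$1) (R y))"
  define \<delta> where "\<delta> = (\<lambda>y. v0 * q (R y))"
  define \<beta> where "\<beta> = (\<lambda>y. v0 * P (\<lambda>M. M$1$1) (R y) - u0 * P (\<lambda>M. M$2$1) (R y))"
  have pfa: "polyfun vcoords \<alpha>" unfolding \<alpha>_def R_def by (intro pf_comp_Rsl pfP c21)
  have pfd: "polyfun vcoords \<delta>" unfolding \<delta>_def R_def by (intro pf_mult pf_const pf_comp_Rsl pfq)
  have pfb: "polyfun vcoords \<beta>" unfolding \<beta>_def R_def by (intro pf_diff pf_mult pf_const pf_comp_Rsl pfP c21 c11)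
  have dMs: "\<delta> (sigM Ms) \<noteq> 0" unfolding \<delta>_def RMs using v0 Ms by simp
  have claim1: "val_m \<Phi> (R y) = affM (\<alpha> y / \<delta> y) (\<beta> y / \<delta> y) (R y)" if qR: "q (R y) \<noteq> 0" for y
  proof -
    define X where "X = val_m \<Phi> (R y)"
    have regR: "M.reg \<Phi> (R y)" using valq[OF qR] by blast
    obtain s where s: "(R y$1$1 + s) * (R y$2$2 + s) - R y$1$2 * R y$2$1 \<noteq> 0" using choose_s by blast
    define A where "A = affM 1 s (R y)"
    have invA: "invertible A" unfolding A_def using s by (intro inv_det2) (simp add: algebra_simps)
    have AR: "A ** R y = R y ** A" unfolding A_def mat_eq2 by (simp add: mmult2 algebra_simps)
    have ARA: "A ** R y ** matrix_inv A = R y" by (rule conj_of_comm[OF invA AR])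
    have "A ** X ** matrix_inv A = X" using compat[OF invA regR] ARA regR unfolding X_def by simp
    then have "A ** X = X ** A" by (rule comm_of_conj[OF invA])
    then have Xf: "X = affM (X$2$1 / R y$2$1) (X$1$1 - X$2$1 / R y$2$1 * R y$1$1) (R y)"
      using comm_form[of s "R y" X] R21 v0 unfolding A_def by simp
    have x21: "X$2$1 = P (\<lambda>M. M$2$1) (R y) / q (R y)" and x11: "X$1$1 = P (\<lambda>M. M$1$1) (R y) / q (R y)"
      using valq[OF qR] unfolding X_def by auto
    have "X$2$1 / R y$2$1 = \<alpha> y / \<delta> y" unfolding x21 R21 \<alpha>_def \<delta>_def using v0 qR by (simp add: field_simps)
    moreover have "X$1$1 - X$2$1 / R y$2$1 * R y$1$1 = \<beta> y / \<delta> y"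
      unfolding x21 x11 R21 R11 \<beta>_def \<delta>_def using v0 qR by (simp add: field_simps)
    ultimately show ?thesis using Xf unfolding X_def by simp
  qed
  have claim2: "val_m \<Phi> M = affM (\<alpha> (sigM M) / \<delta> (sigM M)) (\<beta> (sigM M) / \<delta> (sigM M)) M"
    if H: "q M \<noteq> 0" "M$2$1 \<noteq> 0" "q (R (sigM M)) \<noteq> 0" for M
  proof -
    define y where "y = sigM M"
    define B where "B = mat2 1 ((M$1$1 - u0) / v0) 0 (M$2$1 / v0)"
    have invB: "invertible B" unfolding B_def using v0 H(2) by (intro inv_det2) simp
    have BR: "B ** R y = M ** B"
      unfolding B_def mat_eq2 R_def y_def using v0 H(2)
      by (simp add: mmult2 field_simps power2_eq_square)
    have BRB: "B ** R y ** matrix_inv B = M" by (rule conj_of_comm[OF invB BR])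
    have regR: "M.reg \<Phi> (R y)" using valq H(3) y_def by blast
    have regM: "M.reg \<Phi> M" using valq H(1) by blast
    have "B ** val_m \<Phi> (R y) ** matrix_inv B = val_m \<Phi> M"
      using compat[OF invB regR] BRB regM by simp
    moreover have "B ** affM (\<alpha> y / \<delta> y) (\<beta> y / \<delta> y) (R y) ** matrix_inv B = affM (\<alpha> y / \<delta> y) (\<beta> y / \<delta> y) M"
      by (rule conj_of_comm[OF invB aff_comm[OF BR]])
    ultimately show ?thesis using claim1[of y] H(3) y_def by simp
  qed
  define Pn where "Pn = (\<lambda>c M. \<alpha> (sigM M) * c M + \<beta> (sigM M) * eM c)"
  define qn where "qn = (\<lambda>M. \<delta> (sigM M))"
  have g1: "M.gen (\<lambda>M. q M \<noteq> 0 \<and> M$2$1 \<noteq> 0)"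
    using M.gen_conj[OF M.isrep_gen[OF rep] M.gen_poly[OF pfm, of "mat2 0 0 1 0"]] by simp
  have pk: "polyfun mcoords (\<lambda>M. q (R (sigM M)))" unfolding R_def by (rule pf_comp_sigM[OF pf_comp_Rsl[OF pfq]])
  have g2: "M.gen (\<lambda>M. q (R (sigM M)) \<noteq> 0)"
    using M.gen_poly[OF pk, of Ms] RMs Ms by simp
  have gg: "M.gen (\<lambda>M. (q M \<noteq> 0 \<and> M$2$1 \<noteq> 0) \<and> q (R (sigM M)) \<noteq> 0 \<and> \<Phi> M = val_m \<Phi> M)"
    using M.gen_conj[OF g1 M.gen_conj[OF g2 M.raw_val[OF rat]]] .
  have rep2: "M.isrep \<Phi> Pn qn" unfolding M.isrep_def
  proof
    fix c assume c: "c \<in> mcoords"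
    show "ratrep mcoords (\<lambda>y. c (\<Phi> y)) (Pn c) qn"
    proof (rule M.ratrep_intro)
      show "polyfun mcoords (Pn c)" unfolding Pn_def
        by (intro pf_add pf_mult pf_const pf_comp_sigM pfa pfb pf_coord c)
      show "polyfun mcoords qn" unfolding qn_def by (intro pf_comp_sigM pfd)
      show "M.gen (\<lambda>x. qn x \<noteq> 0 \<and> c (\<Phi> x) = Pn c x / qn x)"
      proof (rule M.gen_mono[OF gg])
        fix M assume H: "(q M \<noteq> 0 \<and> M$2$1 \<noteq> 0) \<and> q (R (sigM M)) \<noteq> 0 \<and> \<Phi> M = val_m \<Phi> M"
        have d: "qn M \<noteq> 0" unfolding qn_def \<delta>_def using H v0 by simp
        have "c (\<Phi> M) = c (affM (\<alpha> (sigM M) / \<delta> (sigM M)) (\<beta> (sigM M) / \<delta> (sigM M)) M)"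
          using H claim2 by simp
        also have "\<dots> = Pn c M / qn M" unfolding MS.aff_c[OF c] Pn_def qn_def using d
          by (simp add: qn_def field_simps)
        finally show "qn M \<noteq> 0 \<and> c (\<Phi> M) = Pn c M / qn M" using d by simp
      qed
    qed
  qed
  have "\<forall>M. \<delta> (sigM M) \<noteq> 0 \<longrightarrow> M.reg \<Phi> M \<and>
        val_m \<Phi> M = affM (\<alpha> (sigM M) / \<delta> (sigM M)) (\<beta> (sigM M) / \<delta> (sigM M)) M"
  proof (intro allI impI conjI)
    fix M assume d: "\<delta> (sigM M) \<noteq> 0"
    then have qn: "qn M \<noteq> 0" by (simp add: qn_def)
    show "M.reg \<Phi> M" using M.isrep_val(1)[OF rep2 qn] .
    show "val_m \<Phi> M = affM (\<alpha> (sigM M) / \<delta> (sigM M)) (\<beta> (sigM M) / \<delta> (sigM M)) M"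
    proof (rule MS.aff_eq)
      fix c assume c: "c \<in> mcoords"
      show "c (val_m \<Phi> M) = \<alpha> (sigM M) / \<delta> (sigM M) * c M + \<beta> (sigM M) / \<delta> (sigM M) * eM c"
        unfolding M.isrep_val(2)[OF rep2 qn c] Pn_def qn_def using d by (simp add: field_simps)
    qed
  qed
  then show ?thesis using pfa pfb pfd dMs by blast
qed


lemma diag2_nth [simp]: "diag2 x $ i $ j = (if i = j then x $ i else 0)"
  by (simp add: diag2_def)

lemma sigM_diag2 [simp]: "sigM (diag2 x) = sigX x"
  by (simp add: vec2_eq)

theorem struct_Psi:
  assumes pf: "polyfun vcoords \<alpha>" "polyfun vcoords \<beta>" "polyfun vcoords \<delta>" and dnz: "\<delta> y0 \<noteq> 0"
    and st: "\<forall>M. \<delta> (sigM M) \<noteq> 0 \<longrightarrow> M.reg \<Phi> M \<and>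
        val_m \<Phi> M = affM (\<alpha> (sigM M) / \<delta> (sigM M)) (\<beta> (sigM M) / \<delta> (sigM M)) M"
  shows "V.ratmap (restrict_diag \<Phi>)"
    "\<And>x. \<delta> (sigX x) \<noteq> 0 \<Longrightarrow> V.reg (restrict_diag \<Phi>) x \<and>
        val_v (restrict_diag \<Phi>) x = affX (\<alpha> (sigX x) / \<delta> (sigX x)) (\<beta> (sigX x) / \<delta> (sigX x)) x"
proof -
  let ?\<Psi> = "restrict_diag \<Phi>"
  have Psi: "?\<Psi> x = affX (\<alpha> (sigX x) / \<delta> (sigX x)) (\<beta> (sigX x) / \<delta> (sigX x)) x" if "\<delta> (sigX x) \<noteq> 0" for x
  proof -
    have "val_m \<Phi> (diag2 x) = affM (\<alpha> (sigX x) / \<delta> (sigX x)) (\<beta> (sigX x) / \<delta> (sigX x)) (diag2 x)"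
      using st that by auto
    then show ?thesis unfolding restrict_diag_def by (simp add: vec_eq_iff)
  qed
  define Pn where "Pn = (\<lambda>(c::complex^2 \<Rightarrow> complex) x. \<alpha> (sigX x) * c x + \<beta> (sigX x))"
  define qn where "qn = (\<lambda>x. \<delta> (sigX x))"
  obtain x0 where x0: "sigX x0 = y0" using XS.sig_surj by blast
  have gq: "V.gen (\<lambda>x. qn x \<noteq> 0)" unfolding qn_def
    by (rule V.gen_poly[OF XS.pf_sig[OF pf(3)], of x0]) (simp add: x0 dnz)
  have rep: "V.isrep ?\<Psi> Pn qn" unfolding V.isrep_def
  proof
    fix c :: "complex^2 \<Rightarrow> complex" assume c: "c \<in> vcoords"
    show "ratrep vcoords (\<lambda>y. c (?\<Psi> y)) (Pn c) qn"
    proof (rule V.ratrep_intro)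
      show "polyfun vcoords (Pn c)" unfolding Pn_def
        by (intro pf_add pf_mult XS.pf_sig pf(1) pf(2) pf_coord c)
      show "polyfun vcoords qn" unfolding qn_def by (rule XS.pf_sig[OF pf(3)])
      show "V.gen (\<lambda>x. qn x \<noteq> 0 \<and> c (?\<Psi> x) = Pn c x / qn x)"
        using gq by (rule V.gen_mono) (simp add: Psi qn_def Pn_def XS.aff_c[OF c] field_simps)
    qed
  qed
  show "V.ratmap ?\<Psi>" by (rule V.isrep_ratmap[OF rep])
  fix x assume d: "\<delta> (sigX x) \<noteq> 0"
  then have q: "qn x \<noteq> 0" by (simp add: qn_def)
  show "V.reg ?\<Psi> x \<and> val_v ?\<Psi> x = affX (\<alpha> (sigX x) / \<delta> (sigX x)) (\<beta> (sigX x) / \<delta> (sigX x)) x"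
  proof
    show "V.reg ?\<Psi> x" using V.isrep_val(1)[OF rep q] .
    show "val_v ?\<Psi> x = affX (\<alpha> (sigX x) / \<delta> (sigX x)) (\<beta> (sigX x) / \<delta> (sigX x)) x"
    proof (rule XS.aff_eq)
      fix c :: "complex^2 \<Rightarrow> complex" assume c: "c \<in> vcoords"
      show "c (val_v ?\<Psi> x) = \<alpha> (sigX x) / \<delta> (sigX x) * c x + \<beta> (sigX x) / \<delta> (sigX x) * 1"
        unfolding V.isrep_val(2)[OF rep q c] Pn_def qn_def using d by (simp add: field_simps)
    qed
  qed
qed

section \<open>Symmetric functions on the diagonal\<close>

definition swp :: "complex^2 \<Rightarrow> complex^2" where
  "swp x = vector [x$2, x$1]"

lemma swp_nth [simp]: "swp x $ 1 = x $ 2" "swp x $ 2 = x $ 1" by (simp_all add: swp_def)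
lemma swp_swp [simp]: "swp (swp x) = x" by (simp add: vec2_eq)
lemma sigX_swp [simp]: "sigX (swp x) = sigX x" by (simp add: vec2_eq algebra_simps)
lemma affX_swp: "affX a b (swp x) = swp (affX a b x)" by (simp add: vec2_eq)

lemma pf_swp: assumes "polyfun vcoords h" shows "polyfun vcoords (\<lambda>x. h (swp x))"
proof (rule pf_comp[OF assms])
  fix c :: "complex^2 \<Rightarrow> complex" assume "c \<in> vcoords"
  then obtain i where c: "c = (\<lambda>x. x $ i)" by (auto simp: vcoords_iff)
  show "polyfun vcoords (\<lambda>x. c (swp x))" using exhaust_2[of i] by (auto simp: c pfv)
qed

lemma reduce_sym:
  assumes "polyfun vcoords P"
  shows "\<exists>A B. polyfun vcoords A \<and> polyfun vcoords B \<and> (\<forall>z. P z = A (sigX z) + B (sigX z) * z$1)"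
  using assms
proof induction
  case (pf_const c)
  show ?case by (rule exI[of _ "\<lambda>y. c"], rule exI[of _ "\<lambda>y. 0"]) (auto intro: polyfun.pf_const)
next
  case (pf_coord f)
  then obtain i where f: "f = (\<lambda>x. x $ i)" by (auto simp: vcoords_iff)
  show ?case
  proof (cases "i = 1")
    case True
    show ?thesis by (rule exI[of _ "\<lambda>y. 0"], rule exI[of _ "\<lambda>y. 1"]) (auto intro: polyfun.pf_const simp: f True)
  next
    case False
    then have "i = 2" using exhaust_2 by blast
    then show ?thesis by (rule_tac exI[of _ "\<lambda>y. y$1"], rule_tac exI[of _ "\<lambda>y. -1"]) (auto intro: polyfun.pf_const pfv simp: f)
  qed
next
  case (pf_add f g)
  then obtain A B A' B' where H: "polyfun vcoords A" "polyfun vcoords B" "\<forall>z. f z = A (sigX z) + B (sigX z) * z$1"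
    "polyfun vcoords A'" "polyfun vcoords B'" "\<forall>z. g z = A' (sigX z) + B' (sigX z) * z$1" by blast
  show ?case
    by (rule exI[of _ "\<lambda>y. A y + A' y"], rule exI[of _ "\<lambda>y. B y + B' y"])
       (use H in \<open>auto intro: polyfun.pf_add simp: algebra_simps\<close>)
next
  case (pf_mult f g)
  then obtain A B A' B' where H: "polyfun vcoords A" "polyfun vcoords B" "\<forall>z. f z = A (sigX z) + B (sigX z) * z$1"
    "polyfun vcoords A'" "polyfun vcoords B'" "\<forall>z. g z = A' (sigX z) + B' (sigX z) * z$1" by blast
  show ?case
  proof (rule exI[of _ "\<lambda>y. A y * A' y - B y * B' y * y$2"], rule exI[of _ "\<lambda>y. A y * B' y + A' y * B y + B y * B' y * y$1"], intro conjI allI)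
    show "polyfun vcoords (\<lambda>y. A y * A' y - B y * B' y * y$2)"
      by (intro pf_diff polyfun.pf_mult pfv H(1) H(2) H(4) H(5))
    show "polyfun vcoords (\<lambda>y. A y * B' y + A' y * B y + B y * B' y * y$1)"
      by (intro polyfun.pf_add polyfun.pf_mult pfv H(1) H(2) H(4) H(5))
    fix z :: "complex^2"
    show "f z * g z = A (sigX z) * A' (sigX z) - B (sigX z) * B' (sigX z) * sigX z $ 2 +
      (A (sigX z) * B' (sigX z) + A' (sigX z) * B (sigX z) + B (sigX z) * B' (sigX z) * sigX z $ 1) * z $ 1"
      using H(3,6) by (simp add: algebra_simps)
  qed
qed

lemma sym_reduce:
  assumes "polyfun vcoords P" "\<And>z. P (swp z) = P z"
  shows "\<exists>A. polyfun vcoords A \<and> (\<forall>z. z$1 \<noteq> z$2 \<longrightarrow> P z = A (sigX z))"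
proof -
  obtain A B where AB: "polyfun vcoords A" "polyfun vcoords B" "\<forall>z. P z = A (sigX z) + B (sigX z) * z$1"
    using reduce_sym[OF assms(1)] by blast
  have "P z = A (sigX z)" if "z$1 \<noteq> z$2" for z
  proof -
    have "P z = A (sigX z) + B (sigX z) * z$2" using assms(2)[of z] AB(3)[rule_format, of "swp z"] by simp
    with AB(3) have "B (sigX z) * (z$1 - z$2) = 0" by (simp add: algebra_simps)
    with that have "B (sigX z) = 0" by simp
    with AB(3) show ?thesis by simp
  qed
  with AB show ?thesis by blast
qed


theorem K_X:
  assumes Psi: "V.ratmap \<Psi>" and pf: "polyfun vcoords \<alpha>" "polyfun vcoords \<beta>" "polyfun vcoords \<delta>"
    and dnz: "\<delta> y0 \<noteq> 0"
    and st: "\<And>x. \<delta> (sigX x) \<noteq> 0 \<Longrightarrow> V.reg \<Psi> x \<and> val_v \<Psi> x = affX (\<alpha> (sigX x) / \<delta> (sigX x)) (\<beta> (sigX x) / \<delta> (sigX x)) x"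
    and Gam: "V.ratmap \<Gamma>"
    and h1: "V.gen (\<lambda>x. V.reg \<Psi> x \<and> V.reg \<Gamma> (val_v \<Psi> x) \<and> val_v \<Gamma> (val_v \<Psi> x) = x)"
    and h2: "V.gen (\<lambda>x. V.reg \<Gamma> x \<and> V.reg \<Psi> (val_v \<Gamma> x) \<and> val_v \<Psi> (val_v \<Gamma> x) = x)"
  shows "\<exists>u1 u2 v. polyfun vcoords u1 \<and> polyfun vcoords u2 \<and> polyfun vcoords v \<and>
     V.gen (\<lambda>x. v (sigX x) \<noteq> 0 \<and> sigX (val_v \<Gamma> x) = psi u1 u2 v (sigX x))"
proof -
  obtain hh1 a1 where hh1: "polyfun vcoords hh1" "hh1 a1 \<noteq> 0"
    "\<forall>x. hh1 x \<noteq> 0 \<longrightarrow> V.reg \<Psi> x \<and> V.reg \<Gamma> (val_v \<Psi> x) \<and> val_v \<Gamma> (val_v \<Psi> x) = x"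
    using h1 unfolding V.gen_def by blast
  have inv2: "V.gen (\<lambda>x. val_v \<Psi> (val_v \<Gamma> x) = x)" using h2 by (rule V.gen_mono) auto
  have domG: "V.gen (\<lambda>x. k (val_v \<Gamma> x) \<noteq> 0)" if "polyfun vcoords k" "k z \<noteq> 0" for k z
    using V.dominant[OF Gam inv2 that] .
  obtain x0 where x0: "sigX x0 = y0" using XS.sig_surj by blast
  have g1: "V.gen (\<lambda>z. \<delta> (sigX (val_v \<Gamma> z)) \<noteq> 0)"
    by (rule domG[OF XS.pf_sig[OF pf(3)], of x0]) (simp add: x0 dnz)
  have g2: "V.gen (\<lambda>z. hh1 (swp (val_v \<Gamma> z)) \<noteq> 0)"
    by (rule domG[OF pf_swp[OF hh1(1)], of "swp a1"]) (simp add: hh1(2))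
  define SE where "SE = (\<lambda>z. (V.reg \<Gamma> z \<and> V.reg \<Psi> (val_v \<Gamma> z) \<and> val_v \<Psi> (val_v \<Gamma> z) = z) \<and>
      \<delta> (sigX (val_v \<Gamma> z)) \<noteq> 0 \<and> hh1 (swp (val_v \<Gamma> z)) \<noteq> 0)"
  have gE: "V.gen SE" unfolding SE_def using V.gen_conj[OF h2 V.gen_conj[OF g1 g2]] .
  have equi: "val_v \<Gamma> (swp z) = swp (val_v \<Gamma> z)" if "SE z" for z
  proof -
    define w where "w = val_v \<Gamma> z"
    have H: "val_v \<Psi> w = z" "\<delta> (sigX w) \<noteq> 0" "hh1 (swp w) \<noteq> 0" using that unfolding SE_def w_def by auto
    have "val_v \<Psi> w = affX (\<alpha> (sigX w) / \<delta> (sigX w)) (\<beta> (sigX w) / \<delta> (sigX w)) w" using st H(2) by blast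
    moreover have "val_v \<Psi> (swp w) = affX (\<alpha> (sigX w) / \<delta> (sigX w)) (\<beta> (sigX w) / \<delta> (sigX w)) (swp w)"
      using st[of "swp w"] H(2) by simp
    ultimately have "val_v \<Psi> (swp w) = swp z" using H(1) by (simp add: affX_swp)
    moreover have "val_v \<Gamma> (val_v \<Psi> (swp w)) = swp w" using hh1(3) H(3) by blast
    ultimately show ?thesis by (simp add: w_def)
  qed
  obtain PG qG where rep: "V.isrep \<Gamma> PG qG" using V.crep[OF Gam] by blast
  have pq: "polyfun vcoords qG" using V.isrep_pf(1)[OF rep] .
  obtain b0 where b0: "qG b0 \<noteq> 0" using V.isrep_pf(3)[OF rep] by blast
  have cl: "\<exists>K n. polyfun vcoords K \<and> (\<forall>z. qG z \<noteq> 0 \<longrightarrow> sigX (val_v \<Gamma> z) $ k = K z / qG z ^ n)" for k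
    using V.isrep_clear[OF rep XS.sig_pf[of k]] .
  obtain K1 n1 where K1: "polyfun vcoords K1" "\<forall>z. qG z \<noteq> 0 \<longrightarrow> sigX (val_v \<Gamma> z) $ 1 = K1 z / qG z ^ n1"
    using cl[of 1] by blast
  obtain K2 n2 where K2: "polyfun vcoords K2" "\<forall>z. qG z \<noteq> 0 \<longrightarrow> sigX (val_v \<Gamma> z) $ 2 = K2 z / qG z ^ n2"
    using cl[of 2] by blast
  define n where "n = n1 + n2"
  obtain L1 where L1: "polyfun vcoords L1" "\<forall>z. qG z \<noteq> 0 \<longrightarrow> sigX (val_v \<Gamma> z) $ 1 = L1 z / qG z ^ n"
    using clear_raise[OF K1(1) pq K1(2), of n] n_def by auto
  obtain L2 where L2: "polyfun vcoords L2" "\<forall>z. qG z \<noteq> 0 \<longrightarrow> sigX (val_v \<Gamma> z) $ 2 = L2 z / qG z ^ n"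
    using clear_raise[OF K2(1) pq K2(2), of n] n_def by auto
  have gq: "V.gen (\<lambda>z. qG z \<noteq> 0 \<and> qG (swp z) \<noteq> 0)"
    using V.gen_conj[OF V.gen_poly[OF pq b0] V.gen_poly[OF pf_swp[OF pq], of "swp b0"]] b0 by simp
  define Den where "Den = (\<lambda>z. (qG z * qG (swp z)) ^ n)"
  have pDen: "polyfun vcoords Den" unfolding Den_def by (intro pf_pow pf_mult pq pf_swp)
  have symDen: "Den (swp z) = Den z" for z by (simp add: Den_def mult.commute)
  have numsym: "\<exists>A. polyfun vcoords A \<and> (\<forall>z. z$1 \<noteq> z$2 \<longrightarrow> L z * qG (swp z) ^ n = A (sigX z))"
    if L: "polyfun vcoords L" "\<forall>z. qG z \<noteq> 0 \<longrightarrow> sigX (val_v \<Gamma> z) $ k = L z / qG z ^ n" for L k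
  proof -
    have pN: "polyfun vcoords (\<lambda>z. L z * qG (swp z) ^ n)" by (intro pf_mult pf_pow L(1) pf_swp pq)
    have pD: "polyfun vcoords (\<lambda>z. L (swp z) * qG (swp (swp z)) ^ n - L z * qG (swp z) ^ n)"
      by (intro pf_diff pf_mult pf_pow pf_swp L(1) pq)
    have gD: "V.gen (\<lambda>z. L (swp z) * qG (swp (swp z)) ^ n - L z * qG (swp z) ^ n = 0)"
    proof (rule V.gen_mono[OF V.gen_conj[OF gE gq]])
      fix z assume H: "SE z \<and> qG z \<noteq> 0 \<and> qG (swp z) \<noteq> 0"
      have "sigX (val_v \<Gamma> (swp z)) $ k = sigX (val_v \<Gamma> z) $ k" using equi H by simp
      then have "L (swp z) / qG (swp z) ^ n = L z / qG z ^ n" using L(2) H by auto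
      then show "L (swp z) * qG (swp (swp z)) ^ n - L z * qG (swp z) ^ n = 0" using H
        by (simp add: field_simps)
    qed
    have sy: "L (swp z) * qG (swp (swp z)) ^ n = L z * qG (swp z) ^ n" for z
      using V.gen_ident[OF pD gD, of z] by simp
    show ?thesis using sym_reduce[OF pN] sy by simp
  qed
  obtain A1 where A1: "polyfun vcoords A1" "\<forall>z. z$1 \<noteq> z$2 \<longrightarrow> L1 z * qG (swp z) ^ n = A1 (sigX z)"
    using numsym[OF L1] by blast
  obtain A2 where A2: "polyfun vcoords A2" "\<forall>z. z$1 \<noteq> z$2 \<longrightarrow> L2 z * qG (swp z) ^ n = A2 (sigX z)"
    using numsym[OF L2] by blast
  obtain AD where AD: "polyfun vcoords AD" "\<forall>z. z$1 \<noteq> z$2 \<longrightarrow> Den z = AD (sigX z)"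
    using sym_reduce[OF pDen symDen] by blast
  have gfin: "V.gen (\<lambda>z. (qG z \<noteq> 0 \<and> qG (swp z) \<noteq> 0) \<and> nsX z \<noteq> 0)"
    using V.gen_conj[OF gq V.gen_poly[OF XS.ns_pf, of "vector [1,0]"]] by (simp add: nsX_def)
  have "V.gen (\<lambda>x. AD (sigX x) \<noteq> 0 \<and> sigX (val_v \<Gamma> x) = psi A1 A2 AD (sigX x))"
  proof (rule V.gen_mono[OF gfin])
    fix z assume H: "(qG z \<noteq> 0 \<and> qG (swp z) \<noteq> 0) \<and> nsX z \<noteq> 0"
    then have ne: "z$1 \<noteq> z$2" by (simp add: nsX_def)
    have D: "AD (sigX z) = (qG z * qG (swp z)) ^ n" using AD(2) ne by (simp add: Den_def)
    have Dn: "AD (sigX z) \<noteq> 0" using D H by simp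
    have "sigX (val_v \<Gamma> z) $ 1 = A1 (sigX z) / AD (sigX z)"
    proof -
      have "sigX (val_v \<Gamma> z) $ 1 = L1 z / qG z ^ n" using L1(2) H by blast
      also have "\<dots> = (L1 z * qG (swp z) ^ n) / (qG z * qG (swp z)) ^ n" using H by (simp add: power_mult_distrib)
      also have "\<dots> = A1 (sigX z) / AD (sigX z)" using A1(2) ne D by simp
      finally show ?thesis .
    qed
    moreover have "sigX (val_v \<Gamma> z) $ 2 = A2 (sigX z) / AD (sigX z)"
    proof -
      have "sigX (val_v \<Gamma> z) $ 2 = L2 z / qG z ^ n" using L2(2) H by blast
      also have "\<dots> = (L2 z * qG (swp z) ^ n) / (qG z * qG (swp z)) ^ n" using H by (simp add: power_mult_distrib)
      also have "\<dots> = A2 (sigX z) / AD (sigX z)" using A2(2) ne D by simp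
      finally show ?thesis .
    qed
    ultimately show "AD (sigX z) \<noteq> 0 \<and> sigX (val_v \<Gamma> z) = psi A1 A2 AD (sigX z)"
      using Dn by (simp add: psi_def vec2_eq)
  qed
  then show ?thesis using A1(1) A2(1) AD(1) by blast
qed


context sigspace begin

lemma sig_aff_inv:
  assumes "\<delta> y \<noteq> 0" "\<alpha> y \<noteq> 0" "sig x = phi \<alpha> \<beta> \<delta> y"
  shows "sig (aff (\<delta> y / \<alpha> y) (- \<beta> y / \<alpha> y) x) = y"
proof -
  have s1: "sig x $ 1 = (\<alpha> y * y$1 + 2 * \<beta> y) / \<delta> y" and
    s2: "sig x $ 2 = (\<alpha> y ^ 2 * y$2 + \<alpha> y * \<beta> y * y$1 + \<beta> y ^ 2) / \<delta> y ^ 2"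
    using assms(3) unfolding phi_def by simp_all
  show ?thesis unfolding sig_aff vec2_eq s1 s2 using assms(1,2)
    by (simp add: field_simps power2_eq_square)
qed

lemma aff_aff1:
  assumes "a \<noteq> 0" shows "aff a b (aff (1 / a) (- b / a) x) = x"
  by (rule sep) (use assms in \<open>simp add: aff_c field_simps\<close>)

lemma aff_aff2:
  assumes "a \<noteq> 0" shows "aff (1 / a) (- b / a) (aff a b x) = x"
  by (rule sep) (use assms in \<open>simp add: aff_c field_simps\<close>)

end

theorem K_M:
  assumes Phi: "M.ratmap \<Phi>" and pf: "polyfun vcoords \<alpha>" "polyfun vcoords \<beta>" "polyfun vcoords \<delta>"
    and dnz: "\<delta> y0 \<noteq> 0"
    and st: "\<And>M. \<delta> (sigM M) \<noteq> 0 \<Longrightarrow> M.reg \<Phi> M \<and> val_m \<Phi> M = affM (\<alpha> (sigM M) / \<delta> (sigM M)) (\<beta> (sigM M) / \<delta> (sigM M)) M"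
    and G: "M.ratmap G"
    and h1: "M.gen (\<lambda>x. M.reg \<Phi> x \<and> M.reg G (val_m \<Phi> x) \<and> val_m G (val_m \<Phi> x) = x)"
    and h2: "M.gen (\<lambda>x. M.reg G x \<and> M.reg \<Phi> (val_m G x) \<and> val_m \<Phi> (val_m G x) = x)"
  shows "\<exists>u1 u2 v. polyfun vcoords u1 \<and> polyfun vcoords u2 \<and> polyfun vcoords v \<and>
     M.gen (\<lambda>x. v (sigM x) \<noteq> 0 \<and> sigM (val_m G x) = psi u1 u2 v (sigM x))"
proof -
  obtain hh1 a1 where hh1: "polyfun mcoords hh1" "hh1 a1 \<noteq> 0"
    "\<forall>x. hh1 x \<noteq> 0 \<longrightarrow> M.reg \<Phi> x \<and> M.reg G (val_m \<Phi> x) \<and> val_m G (val_m \<Phi> x) = x"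
    using h1 unfolding M.gen_def by blast
  have inv2: "M.gen (\<lambda>x. val_m \<Phi> (val_m G x) = x)" using h2 by (rule M.gen_mono) auto
  have domG: "M.gen (\<lambda>x. k (val_m G x) \<noteq> 0)" if "polyfun mcoords k" "k z \<noteq> 0" for k z
    using M.dominant[OF G inv2 that] .
  obtain z0 where z0: "sigM z0 = y0" using MS.sig_surj by blast
  have pfdM: "polyfun mcoords (\<lambda>M. \<delta> (sigM M))" by (rule pf_comp_sigM[OF pf(3)])
  have g1: "M.gen (\<lambda>N. \<delta> (sigM (val_m G N)) \<noteq> 0)"
    by (rule domG[OF pfdM, of z0]) (simp add: z0 dnz)
  have g2: "M.gen (\<lambda>N. hh1 (val_m G N) \<noteq> 0)" by (rule domG[OF hh1(1,2)])
  have g3: "M.gen (\<lambda>N. N$2$1 \<noteq> 0)" by (rule M.gen_poly[OF pfm, of "mat2 0 0 1 0"]) simp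
  have basic: "\<alpha> (sigM (val_m G N)) \<noteq> 0 \<and>
      N = affM (\<alpha> (sigM (val_m G N)) / \<delta> (sigM (val_m G N))) (\<beta> (sigM (val_m G N)) / \<delta> (sigM (val_m G N))) (val_m G N)"
    if "val_m \<Phi> (val_m G N) = N" "\<delta> (sigM (val_m G N)) \<noteq> 0" "N$2$1 \<noteq> 0" for N
  proof -
    have e: "N = affM (\<alpha> (sigM (val_m G N)) / \<delta> (sigM (val_m G N))) (\<beta> (sigM (val_m G N)) / \<delta> (sigM (val_m G N))) (val_m G N)"
      using st[OF that(2)] that(1) by simp
    then have "nsM N = \<alpha> (sigM (val_m G N)) / \<delta> (sigM (val_m G N)) * nsM (val_m G N)"
      by (metis MS.ns_aff)
    then show ?thesis using that(3) e by (auto simp: nsM_def)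
  qed
  define S0 where "S0 = (\<lambda>N. (M.reg G N \<and> M.reg \<Phi> (val_m G N) \<and> val_m \<Phi> (val_m G N) = N) \<and>
       \<delta> (sigM (val_m G N)) \<noteq> 0 \<and> hh1 (val_m G N) \<noteq> 0 \<and> N$2$1 \<noteq> 0)"
  have gS0: "M.gen S0" unfolding S0_def using M.gen_conj[OF h2 M.gen_conj[OF g1 M.gen_conj[OF g2 g3]]] .
  obtain Ns where Ns: "S0 Ns" using M.gen_ex[OF gS0] by blast
  obtain PG qG where rep: "M.isrep G PG qG" and qNs: "qG Ns \<noteq> 0"
    using M.crep_at[of G Ns] Ns unfolding S0_def by blast
  have pqG: "polyfun mcoords qG" using M.isrep_pf(1)[OF rep] .
  define u' where "u' = Ns$1$1"
  define v' where "v' = Ns$2$1"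
  have v': "v' \<noteq> 0" using Ns by (simp add: S0_def v'_def)
  define R where "R = Rsl u' v'"
  have sigR: "sigM (R y) = y" for y unfolding R_def using sig_Rsl[OF v'] .
  have RNs: "R (sigM Ns) = Ns" unfolding R_def u'_def v'_def using Rsl_self Ns by (simp add: S0_def)
  have pfqR: "polyfun vcoords (\<lambda>w. qG (R w))" unfolding R_def by (rule pf_comp_Rsl[OF pqG])
  have clr: "\<exists>K n. polyfun vcoords K \<and> (\<forall>w. qG (R w) \<noteq> 0 \<longrightarrow> sigM (val_m G (R w)) $ i = K w / qG (R w) ^ n)" for i
  proof (rule pf_clear[OF MS.sig_pf _ pfqR])
    fix c assume c: "c \<in> mcoords"
    show "\<exists>P. polyfun vcoords P \<and> (\<forall>x. qG (R x) \<noteq> 0 \<longrightarrow> c (val_m G (R x)) = P x / qG (R x))"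
      using M.isrep_val(2)[OF rep _ c] pf_comp_Rsl[OF M.isrep_pf(2)[OF rep c]] unfolding R_def by blast
  qed
  obtain U1 m1 where U1: "polyfun vcoords U1" "\<forall>w. qG (R w) \<noteq> 0 \<longrightarrow> sigM (val_m G (R w)) $ 1 = U1 w / qG (R w) ^ m1"
    using clr[of 1] by blast
  obtain U2 m2 where U2: "polyfun vcoords U2" "\<forall>w. qG (R w) \<noteq> 0 \<longrightarrow> sigM (val_m G (R w)) $ 2 = U2 w / qG (R w) ^ m2"
    using clr[of 2] by blast
  define m where "m = m1 + m2"
  obtain W1 where W1: "polyfun vcoords W1" "\<forall>w. qG (R w) \<noteq> 0 \<longrightarrow> sigM (val_m G (R w)) $ 1 = W1 w / qG (R w) ^ m"
    using clear_raise[OF U1(1) pfqR U1(2), of m] m_def by auto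
  obtain W2 where W2: "polyfun vcoords W2" "\<forall>w. qG (R w) \<noteq> 0 \<longrightarrow> sigM (val_m G (R w)) $ 2 = W2 w / qG (R w) ^ m"
    using clear_raise[OF U2(1) pfqR U2(2), of m] m_def by auto
  define v where "v = (\<lambda>w. qG (R w) ^ m)"
  have pv: "polyfun vcoords v" unfolding v_def by (rule pf_pow[OF pfqR])
  have psiR: "psi W1 W2 v w = sigM (val_m G (R w))" if "qG (R w) \<noteq> 0" for w
    using W1(2) W2(2) that by (simp add: psi_def vec2_eq v_def)
  define Y where "Y = (\<lambda>N. sigM (val_m G N))"
  define Mp where "Mp = (\<lambda>N. affM (\<delta> (Y N) / \<alpha> (Y N)) (- \<beta> (Y N) / \<alpha> (Y N)) (R (sigM N)))"
  have key: "sigM (val_m G (R (sigM N))) = Y N"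
    if H: "S0 N" "hh1 (Mp N) \<noteq> 0" for N
  proof -
    define M0 where "M0 = val_m G N"
    define y where "y = sigM M0"
    have HH: "val_m \<Phi> M0 = N" "\<delta> y \<noteq> 0" "N$2$1 \<noteq> 0" using H(1) unfolding S0_def M0_def y_def by auto
    have b: "\<alpha> y \<noteq> 0" "N = affM (\<alpha> y / \<delta> y) (\<beta> y / \<delta> y) M0"
      using basic[of N, folded M0_def, folded y_def] HH by blast+
    have sN: "sigM N = phi \<alpha> \<beta> \<delta> y"
    proof -
      have "sigM (affM (\<alpha> y / \<delta> y) (\<beta> y / \<delta> y) M0) = phi \<alpha> \<beta> \<delta> y"
        by (rule MS.sig_aff_phi) (use HH(2) y_def in auto)
      then show ?thesis using b(2) by simp
    qed
    have sMp: "sigM (Mp N) = y"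
      unfolding Mp_def Y_def M0_def[symmetric] y_def[symmetric]
      by (rule MS.sig_aff_inv) (use HH(2) b(1) sigR sN in auto)
    have "val_m \<Phi> (Mp N) = affM (\<alpha> y / \<delta> y) (\<beta> y / \<delta> y) (Mp N)"
      using st[of "Mp N"] sMp HH(2) by simp
    also have "\<dots> = R (sigM N)"
    proof -
      have "\<delta> y / \<alpha> y = 1 / (\<alpha> y / \<delta> y)" "- \<beta> y / \<alpha> y = - (\<beta> y / \<delta> y) / (\<alpha> y / \<delta> y)"
        using HH(2) b(1) by (auto simp: field_simps)
      then show ?thesis unfolding Mp_def Y_def M0_def[symmetric] y_def[symmetric]
        using MS.aff_aff1[of "\<alpha> y / \<delta> y" "\<beta> y / \<delta> y" "R (sigM N)"] HH(2) b(1) by simp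
    qed
    finally have "val_m \<Phi> (Mp N) = R (sigM N)" .
    moreover have "val_m G (val_m \<Phi> (Mp N)) = Mp N" using hh1(3) H(2) by blast
    ultimately show ?thesis using sMp by (simp add: Y_def M0_def y_def)
  qed
  have gMp: "M.gen (\<lambda>N. hh1 (Mp N) \<noteq> 0)"
  proof -
    have cl2: "\<exists>K n. polyfun mcoords K \<and> (\<forall>N. qG N \<noteq> 0 \<longrightarrow> k (Y N) = K N / qG N ^ n)"
      if "polyfun vcoords k" for k
      unfolding Y_def using M.isrep_clear[OF rep pf_comp_sigM[OF that]] .
    obtain Ka na where Ka: "polyfun mcoords Ka" "\<forall>N. qG N \<noteq> 0 \<longrightarrow> \<alpha> (Y N) = Ka N / qG N ^ na"
      using cl2[OF pf(1)] by blast
    obtain Kb nb where Kb: "polyfun mcoords Kb" "\<forall>N. qG N \<noteq> 0 \<longrightarrow> \<beta> (Y N) = Kb N / qG N ^ nb"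
      using cl2[OF pf(2)] by blast
    obtain Kd nd where Kd: "polyfun mcoords Kd" "\<forall>N. qG N \<noteq> 0 \<longrightarrow> \<delta> (Y N) = Kd N / qG N ^ nd"
      using cl2[OF pf(3)] by blast
    define n where "n = na + nb + nd"
    obtain Ka' where Ka': "polyfun mcoords Ka'" "\<forall>N. qG N \<noteq> 0 \<longrightarrow> \<alpha> (Y N) = Ka' N / qG N ^ n"
      using clear_raise[OF Ka(1) pqG Ka(2), of n] n_def by auto
    obtain Kb' where Kb': "polyfun mcoords Kb'" "\<forall>N. qG N \<noteq> 0 \<longrightarrow> \<beta> (Y N) = Kb' N / qG N ^ n"
      using clear_raise[OF Kb(1) pqG Kb(2), of n] n_def by auto
    obtain Kd' where Kd': "polyfun mcoords Kd'" "\<forall>N. qG N \<noteq> 0 \<longrightarrow> \<delta> (Y N) = Kd' N / qG N ^ n"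
      using clear_raise[OF Kd(1) pqG Kd(2), of n] n_def by auto
    define qq where "qq = (\<lambda>N. qG N * Ka' N)"
    have pqq: "polyfun mcoords qq" unfolding qq_def by (intro pf_mult pqG Ka'(1))
    have "\<exists>H j. polyfun mcoords H \<and> (\<forall>N. qq N \<noteq> 0 \<longrightarrow> hh1 (Mp N) = H N / qq N ^ j)"
    proof (rule pf_clear[OF hh1(1) _ pqq])
      fix c assume c: "c \<in> mcoords"
      define Pc where "Pc = (\<lambda>N. (Kd' N * c (R (sigM N)) - Kb' N * eM c) * qG N)"
      have "polyfun mcoords Pc" unfolding Pc_def R_def
        by (intro pf_mult pf_diff pf_const Kd'(1) Kb'(1) pqG pf_comp_sigM pf_comp_Rsl pf_coord c)
      moreover have "c (Mp N) = Pc N / qq N" if "qq N \<noteq> 0" for N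
      proof -
        have q: "qG N \<noteq> 0" "Ka' N \<noteq> 0" using that by (auto simp: qq_def)
        have a: "\<alpha> (Y N) = Ka' N / qG N ^ n" and b: "\<beta> (Y N) = Kb' N / qG N ^ n"
          and d: "\<delta> (Y N) = Kd' N / qG N ^ n"
          using Ka'(2) Kb'(2) Kd'(2) q by auto
        show ?thesis unfolding Mp_def MS.aff_c[OF c] Pc_def qq_def a b d using q
          by (simp add: field_simps)
      qed
      ultimately show "\<exists>P. polyfun mcoords P \<and> (\<forall>x. qq x \<noteq> 0 \<longrightarrow> c (Mp x) = P x / qq x)" by blast
    qed
    then obtain H j where H: "polyfun mcoords H" "\<forall>N. qq N \<noteq> 0 \<longrightarrow> hh1 (Mp N) = H N / qq N ^ j" by blast
    define G0 where "G0 = val_m G Ns"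
    define yN where "yN = sigM G0"
    have YN: "Y Ns = yN" by (simp add: Y_def G0_def yN_def)
    have HNs: "val_m \<Phi> G0 = Ns" "\<delta> yN \<noteq> 0" "Ns$2$1 \<noteq> 0" "hh1 G0 \<noteq> 0"
      using Ns unfolding S0_def G0_def yN_def by auto
    have bNs: "\<alpha> yN \<noteq> 0" "Ns = affM (\<alpha> yN / \<delta> yN) (\<beta> yN / \<delta> yN) G0"
      using basic[of Ns, folded G0_def, folded yN_def] HNs by blast+
    have "Mp Ns = G0"
    proof -
      have e: "\<delta> yN / \<alpha> yN = 1 / (\<alpha> yN / \<delta> yN)"
        "- \<beta> yN / \<alpha> yN = - (\<beta> yN / \<delta> yN) / (\<alpha> yN / \<delta> yN)"
        using HNs(2) bNs(1) by (auto simp: field_simps)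
      have "Mp Ns = affM (\<delta> yN / \<alpha> yN) (- \<beta> yN / \<alpha> yN) Ns" unfolding Mp_def YN RNs ..
      also have "\<dots> = affM (1 / (\<alpha> yN / \<delta> yN)) (- (\<beta> yN / \<delta> yN) / (\<alpha> yN / \<delta> yN))
          (affM (\<alpha> yN / \<delta> yN) (\<beta> yN / \<delta> yN) G0)" unfolding e by (subst bNs(2)) (rule refl)
      also have "\<dots> = G0" by (rule MS.aff_aff2) (use HNs(2) bNs(1) in auto)
      finally show ?thesis .
    qed
    then have h1Ns: "hh1 (Mp Ns) \<noteq> 0" using HNs(4) by simp
    have "Ka' Ns \<noteq> 0" using Ka'(2) qNs bNs(1) YN by auto
    then have qqNs: "qq Ns \<noteq> 0" using qNs by (simp add: qq_def)
    have "H Ns \<noteq> 0" using H(2) qqNs h1Ns by auto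
    then have "M.gen (\<lambda>N. qq N * H N \<noteq> 0)" using qqNs by (intro M.gen_poly[of _ Ns] pf_mult pqq H(1)) auto
    then show ?thesis by (rule M.gen_mono) (use H(2) in auto)
  qed
  have gR: "M.gen (\<lambda>N. qG (R (sigM N)) \<noteq> 0)"
    by (rule M.gen_poly[OF pf_comp_sigM[OF pfqR], of Ns]) (simp add: RNs qNs)
  have "M.gen (\<lambda>N. v (sigM N) \<noteq> 0 \<and> sigM (val_m G N) = psi W1 W2 v (sigM N))"
  proof (rule M.gen_mono[OF M.gen_conj[OF gS0 M.gen_conj[OF gMp gR]]])
    fix N assume H: "S0 N \<and> hh1 (Mp N) \<noteq> 0 \<and> qG (R (sigM N)) \<noteq> 0"
    then show "v (sigM N) \<noteq> 0 \<and> sigM (val_m G N) = psi W1 W2 v (sigM N)"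
      using key[of N] psiR[of "sigM N"] by (simp add: v_def Y_def)
  qed
  then show ?thesis using W1(1) W2(1) pv by blast
qed


theorem proposition2p3:
  fixes \<Phi> :: "complex^2^2 \<Rightarrow> complex^2^2"
  assumes "rational_map_m \<Phi>"
    and "compatible_conj \<Phi>"
  shows "birational_m \<Phi> \<longleftrightarrow> birational_v (restrict_diag \<Phi>)"
proof -
  have rat: "M.ratmap \<Phi>" using assms(1) by (simp add: M_ratmap)
  obtain \<alpha> \<beta> \<delta> y0 where pf: "polyfun vcoords \<alpha>" "polyfun vcoords \<beta>" "polyfun vcoords \<delta>"
    and dnz: "\<delta> y0 \<noteq> 0"
    and stA: "\<forall>M. \<delta> (sigM M) \<noteq> 0 \<longrightarrow> M.reg \<Phi> M \<and>
        val_m \<Phi> M = affM (\<alpha> (sigM M) / \<delta> (sigM M)) (\<beta> (sigM M) / \<delta> (sigM M)) M"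
    using struct_Phi[OF rat assms(2)] by blast
  have stM: "\<And>M. \<delta> (sigM M) \<noteq> 0 \<Longrightarrow> M.reg \<Phi> M \<and>
        val_m \<Phi> M = affM (\<alpha> (sigM M) / \<delta> (sigM M)) (\<beta> (sigM M) / \<delta> (sigM M)) M"
    using stA by blast
  note PsiS = struct_Psi[OF pf dnz stA]
  show ?thesis
  proof
    assume "birational_m \<Phi>"
    then obtain G where G: "M.ratmap G"
      and h1: "M.gen (\<lambda>x. M.reg \<Phi> x \<and> M.reg G (val_m \<Phi> x) \<and> val_m G (val_m \<Phi> x) = x)"
      and h2: "M.gen (\<lambda>x. M.reg G x \<and> M.reg \<Phi> (val_m G x) \<and> val_m \<Phi> (val_m G x) = x)"
      unfolding M_bir[symmetric] M.bir_def by blast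
    obtain u1 u2 v where u: "polyfun vcoords u1" "polyfun vcoords u2" "polyfun vcoords v"
      and K: "M.gen (\<lambda>x. v (sigM x) \<noteq> 0 \<and> sigM (val_m G x) = psi u1 u2 v (sigM x))"
      using K_M[OF rat pf dnz stM G h1 h2] by blast
    have mid: "MID \<alpha> \<beta> \<delta>" by (rule MS.K_mid[OF rat G pf dnz stM h1 h2 u K])
    have "V.bir (restrict_diag \<Phi>)" by (rule XS.mid_bir[OF PsiS(1) pf PsiS(2) mid])
    then show "birational_v (restrict_diag \<Phi>)" by (simp add: V_bir)
  next
    assume "birational_v (restrict_diag \<Phi>)"
    then obtain \<Gamma> where Gam: "V.ratmap \<Gamma>"
      and h1: "V.gen (\<lambda>x. V.reg (restrict_diag \<Phi>) x \<and> V.reg \<Gamma> (val_v (restrict_diag \<Phi>) x) \<and>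
                val_v \<Gamma> (val_v (restrict_diag \<Phi>) x) = x)"
      and h2: "V.gen (\<lambda>x. V.reg \<Gamma> x \<and> V.reg (restrict_diag \<Phi>) (val_v \<Gamma> x) \<and>
                val_v (restrict_diag \<Phi>) (val_v \<Gamma> x) = x)"
      unfolding V_bir[symmetric] V.bir_def by blast
    obtain u1 u2 v where u: "polyfun vcoords u1" "polyfun vcoords u2" "polyfun vcoords v"
      and K: "V.gen (\<lambda>x. v (sigX x) \<noteq> 0 \<and> sigX (val_v \<Gamma> x) = psi u1 u2 v (sigX x))"
      using K_X[OF PsiS(1) pf dnz PsiS(2) Gam h1 h2] by blast
    have mid: "MID \<alpha> \<beta> \<delta>" by (rule XS.K_mid[OF PsiS(1) Gam pf dnz PsiS(2) h1 h2 u K])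
    have "M.bir \<Phi>" by (rule MS.mid_bir[OF rat pf stM mid])
    then show "birational_m \<Phi>" by (simp add: M_bir)
  qed
qed


end
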